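(* Let $\mathcal{X}$ be a measurable space, $\mathcal{Y}$ a finite set, and $W:\mathcal{X}\to\mathcal{Y}$ a channel. Then for any $\lambda_1,\lambda_2>0$ with $\lambda_1+\lambda_2<1$, \[ \frac14\,\underline{d}_M\!\left(\sqrt{\widetilde{\mathcal{X}}}\right)\;\le\;\dot{C}_{\mathrm{DI}}(W)\;\le\;\liminf_{n\to\infty}\frac{1}{n\log n}\log N_{\mathrm{DI}}(n,\lambda_1,\lambda_2)\;\le\;\frac12\,\underline{d}_M\!\left(\sqrt{\widetilde{\mathcal{X}}}\right). \]
   Context: A channel $W:\mathcal{X}\to\mathcal{Y}$ is a measurable map $x\mapsto W_x\in\mathcal{P}(\mathcal{Y})$, where $\mathcal{P}(\mathcal{Y})$ is the set of probability distributions on $\mathcal{Y}$ (viewed as vectors in $\mathbb{R}^{\mathcal{Y}}$, with the Borel $\sigma$-algebra). For $x^n=x_1\dots x_n\in\mathcal{X}^n$, $W_{x^n}$ is the product distribution on $\mathcal{Y}^n$, $W_{x^n}(y^n)=\prod_{i=1}^n W_{x_i}(y_i)$. An $(n,N,\lambda_1,\lambda_2)$-deterministic identification (DI) code is a family $\{(u_j,\mathcal{E}_j):j\in[N]\}$ with $u_j\in\mathcal{X}^n$, $\mathcal{E}_j\subset\mathcal{Y}^n$, such that $W_{u_j}(\mathcal{E}_j)\ge 1-\lambda_1$ for all $j$ and $W_{u_j}(\mathcal{E}_k)\le\lambda_2$ for all $j\ne k$. $N_{\mathrm{DI}}(n,\lambda_1,\lambda_2)$ is the largest $N$ for which such a code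 exists. Logarithms are base 2. The (pessimistic, slightly superexponential) DI capacity is $\dot{C}_{\mathrm{DI}}(W)=\inf_{\lambda_1,\lambda_2>0}\liminf_{n\to\infty}\frac{1}{n\log n}\log N_{\mathrm{DI}}(n,\lambda_1,\lambda_2)$. Let $\sqrt{\widetilde{\mathcal{X}}}=\{(\sqrt{W_x(y)})_{y\in\mathcal{Y}}:x\in\mathcal{X}\}\subset\mathbb{R}^{\mathcal{Y}}$ with the Euclidean metric. For a nonempty bounded set $F$ in a Euclidean space, $\Gamma_\delta(F)$ denotes the minimum number of closed balls of radius $\delta$ centered at points of $F$ whose union contains $F$, and the lower Minkowski dimension is $\underline{d}_M(F)=\liminf_{\delta\to0}\frac{\log\Gamma_\delta(F)}{-\log\delta}$. *)

theory Defs
  imports "HOL-Analysis.Analysis"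
begin

definition channel :: "'x measure \<Rightarrow> ('x \<Rightarrow> 'y::finite \<Rightarrow> real) \<Rightarrow> bool" where
  "channel M W \<longleftrightarrow>
     (\<forall>x\<in>space M. (\<forall>y. 0 \<le> W x y) \<and> (\<Sum>y\<in>UNIV. W x y) = 1) \<and>
     (\<lambda>x. \<chi> y. W x y) \<in> borel_measurable M"

definition words :: "nat \<Rightarrow> (nat \<Rightarrow> 'y) set" where
  "words n = PiE {..<n} (\<lambda>_. UNIV)"

definition prodW :: "('x \<Rightarrow> 'y::finite \<Rightarrow> real) \<Rightarrow> nat \<Rightarrow> (nat \<Rightarrow> 'x) \<Rightarrow> (nat \<Rightarrow> 'y) set \<Rightarrow> real" where
  "prodW W n u E = (\<Sum>y\<in>E \<inter> words n. \<Prod>i<n. W (u i) (y i))"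

definition DI_code :: "'x measure \<Rightarrow> ('x \<Rightarrow> 'y::finite \<Rightarrow> real) \<Rightarrow> nat \<Rightarrow> nat \<Rightarrow> real \<Rightarrow> real
    \<Rightarrow> (nat \<Rightarrow> nat \<Rightarrow> 'x) \<Rightarrow> (nat \<Rightarrow> (nat \<Rightarrow> 'y) set) \<Rightarrow> bool" where
  "DI_code M W n N l1 l2 u E \<longleftrightarrow>
     (\<forall>j<N. \<forall>i<n. u j i \<in> space M) \<and>
     (\<forall>j<N. E j \<subseteq> words n) \<and>
     (\<forall>j<N. prodW W n (u j) (E j) \<ge> 1 - l1) \<and>
     (\<forall>j<N. \<forall>k<N. j \<noteq> k \<longrightarrow> prodW W n (u j) (E k) \<le> l2)"

definition N_DI :: "'x measure \<Rightarrow> ('x \<Rightarrow> 'y::finite \<Rightarrow> real) \<Rightarrow> nat \<Rightarrow> real \<Rightarrow> real \<Rightarrow> ereal" where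
  "N_DI M W n l1 l2 = (SUP N \<in> {N. \<exists>u E. DI_code M W n N l1 l2 u E}. ereal (real N))"

definition DI_rate :: "'x measure \<Rightarrow> ('x \<Rightarrow> 'y::finite \<Rightarrow> real) \<Rightarrow> real \<Rightarrow> real \<Rightarrow> nat \<Rightarrow> ereal" where
  "DI_rate M W l1 l2 n =
     (if N_DI M W n l1 l2 = \<infinity> then \<infinity>
      else ereal (log 2 (real_of_ereal (N_DI M W n l1 l2)) / (real n * log 2 (real n))))"

definition C_DI :: "'x measure \<Rightarrow> ('x \<Rightarrow> 'y::finite \<Rightarrow> real) \<Rightarrow> ereal" where
  "C_DI M W = (INF l \<in> {l::real\<times>real. 0 < fst l \<and> 0 < snd l}. liminf (DI_rate M W (fst l) (snd l)))"

definition cover_num :: "'a::metric_space set \<Rightarrow> real \<Rightarrow> nat" where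
  "cover_num F d = (LEAST k. \<exists>C. finite C \<and> card C = k \<and> C \<subseteq> F \<and> F \<subseteq> (\<Union>c\<in>C. cball c d))"

definition lower_minkowski_dim :: "'a::metric_space set \<Rightarrow> ereal" where
  "lower_minkowski_dim F =
     Liminf (at_right 0) (\<lambda>d. ereal (log 2 (real (cover_num F d)) / (- log 2 d)))"

definition sqrt_X :: "'x measure \<Rightarrow> ('x \<Rightarrow> 'y::finite \<Rightarrow> real) \<Rightarrow> (real^'y) set" where
  "sqrt_X M W = (\<lambda>x. \<chi> y. sqrt (W x y)) ` space M"

end

theory Submission
  imports Defs "HOL-Real_Asymp.Real_Asymp"
begin

lemma sum_words_prod:
  "(\<Sum>y\<in>words n. \<Prod>i<n. f i (y i)) = (\<Prod>i<n. \<Sum>a\<in>(UNIV::'y::finite set). (f i a::real))"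
  unfolding words_def by (rule prod_sum_PiE[symmetric]) auto

lemma finite_words[simp]: "finite (words n :: (nat \<Rightarrow> 'y::finite) set)"
  unfolding words_def by (auto intro!: finite_PiE)

lemma dist_sq_sqrt:
  fixes p q :: "'y::finite \<Rightarrow> real"
  shows "(dist (\<chi> y. sqrt (p y)) (\<chi> y. sqrt (q y)))\<^sup>2 = (\<Sum>a\<in>UNIV. (sqrt (p a) - sqrt (q a))\<^sup>2)"
  unfolding dist_vec_def L2_set_def
  by (simp add: dist_real_def sum_nonneg)

lemma bhatt:
  fixes p q :: "'y::finite \<Rightarrow> real"
  assumes "\<And>a. p a \<ge> 0" "\<And>a. q a \<ge> 0" "sum p UNIV = 1" "sum q UNIV = 1"
  shows "(\<Sum>a\<in>UNIV. sqrt (p a * q a)) = 1 - (\<Sum>a\<in>UNIV. (sqrt (p a) - sqrt (q a))\<^sup>2) / 2"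
proof -
  have "(\<Sum>a\<in>UNIV. (sqrt (p a) - sqrt (q a))\<^sup>2) = (\<Sum>a\<in>UNIV. p a + q a - 2 * sqrt (p a * q a))"
    by (rule sum.cong) (auto simp: power2_eq_square algebra_simps real_sqrt_mult assms)
  also have "\<dots> = 2 - 2 * (\<Sum>a\<in>UNIV. sqrt (p a * q a))"
    by (simp add: sum_subtractf sum.distrib sum_distrib_left assms)
  finally have "(\<Sum>a\<in>UNIV. (sqrt (p a) - sqrt (q a))\<^sup>2) = 2 - 2 * (\<Sum>a\<in>UNIV. sqrt (p a * q a))" .
  then show ?thesis by (simp add: field_simps)
qed

lemma var_sum:
  fixes p g :: "nat \<Rightarrow> 'y::finite \<Rightarrow> real"
  assumes p1: "\<forall>i<n. sum (p i) UNIV = 1" and p0: "\<forall>i<n. (\<Sum>a\<in>UNIV. p i a * g i a) = 0"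
  shows "(\<Sum>y\<in>words n. (\<Prod>i<n. p i (y i)) * (\<Sum>i<n. g i (y i))\<^sup>2) = (\<Sum>i<n. \<Sum>a\<in>UNIV. p i a * (g i a)\<^sup>2)"
proof -
  have key: "(\<Sum>y\<in>words n. (\<Prod>k<n. p k (y k)) * (g i (y i) * g j (y j)))
      = (if i = j then (\<Sum>a\<in>UNIV. p i a * (g i a)\<^sup>2) else 0)" if ij: "i<n" "j<n" for i j
  proof -
    define h where "h k a = p k a * (if k = i then g i a else 1) * (if k = j then g j a else 1)" for k a
    have "(\<Prod>k<n. p k (y k)) * (g i (y i) * g j (y j)) = (\<Prod>k<n. h k (y k))" for y
    proof -
      have "(\<Prod>k<n. h k (y k)) = (\<Prod>k<n. p k (y k)) * (\<Prod>k<n. (if k = i then g i (y k) else 1))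
           * (\<Prod>k<n. (if k = j then g j (y k) else 1))"
        unfolding h_def prod.distrib by simp
      also have "\<dots> = (\<Prod>k<n. p k (y k)) * (g i (y i) * g j (y j))"
        using ij by (simp add: prod.delta)
      finally show ?thesis by simp
    qed
    then have "(\<Sum>y\<in>words n. (\<Prod>k<n. p k (y k)) * (g i (y i) * g j (y j))) = (\<Prod>k<n. \<Sum>a\<in>UNIV. h k a)"
      by (simp add: sum_words_prod)
    also have "\<dots> = (if i = j then (\<Sum>a\<in>UNIV. p i a * (g i a)\<^sup>2) else 0)"
    proof (cases "i = j")
      case True
      have "(\<Prod>k<n. \<Sum>a\<in>UNIV. h k a) = (\<Prod>k<n. if k = i then (\<Sum>a\<in>UNIV. p i a * (g i a)\<^sup>2) else 1)"
        by (rule prod.cong) (auto simp: h_def True p1 power2_eq_square mult.assoc)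
      also have "\<dots> = (\<Sum>a\<in>UNIV. p i a * (g i a)\<^sup>2)" using ij by (simp add: prod.delta)
      finally show ?thesis using True by simp
    next
      case False
      have "(\<Sum>a\<in>UNIV. h i a) = 0" using False p0 ij by (simp add: h_def)
      then have "(\<Prod>k<n. \<Sum>a\<in>UNIV. h k a) = 0" using ij by (intro prod_zero) auto
      then show ?thesis using False by simp
    qed
    finally show ?thesis .
  qed
  have "(\<Sum>y\<in>words n. (\<Prod>i<n. p i (y i)) * (\<Sum>i<n. g i (y i))\<^sup>2)
     = (\<Sum>y\<in>words n. \<Sum>i<n. \<Sum>j<n. (\<Prod>k<n. p k (y k)) * (g i (y i) * g j (y j)))"
  proof -
    have sq: "(\<Sum>i<n. g i (y i))\<^sup>2 = (\<Sum>i<n. \<Sum>j<n. g i (y i) * g j (y j))" for y :: "nat \<Rightarrow> 'y"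
      by (simp add: power2_eq_square sum_product)
    show ?thesis by (simp add: sq sum_distrib_left)
  qed
  also have "\<dots> = (\<Sum>i<n. \<Sum>y\<in>words n. \<Sum>j<n. (\<Prod>k<n. p k (y k)) * (g i (y i) * g j (y j)))"
    by (rule sum.swap)
  also have "\<dots> = (\<Sum>i<n. \<Sum>j<n. \<Sum>y\<in>words n. (\<Prod>k<n. p k (y k)) * (g i (y i) * g j (y j)))"
    by (intro sum.cong refl) (rule sum.swap)
  also have "\<dots> = (\<Sum>i<n. \<Sum>j<n. (if i = j then (\<Sum>a\<in>UNIV. p i a * (g i a)\<^sup>2) else 0))"
    by (intro sum.cong refl) (simp add: key)
  also have "\<dots> = (\<Sum>i<n. \<Sum>a\<in>UNIV. p i a * (g i a)\<^sup>2)"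
    by (simp add: sum.delta)
  finally show ?thesis .
qed

lemma cheb:
  fixes P f :: "'a \<Rightarrow> real"
  assumes "finite A" "\<And>y. y \<in> A \<Longrightarrow> P y \<ge> 0" "\<tau> > 0"
  shows "(\<Sum>y\<in>{y\<in>A. \<tau> \<le> \<bar>f y\<bar>}. P y) \<le> (\<Sum>y\<in>A. P y * (f y)\<^sup>2) / \<tau>\<^sup>2"
proof -
  have "(\<Sum>y\<in>{y\<in>A. \<tau> \<le> \<bar>f y\<bar>}. P y) \<le> (\<Sum>y\<in>{y\<in>A. \<tau> \<le> \<bar>f y\<bar>}. P y * (f y)\<^sup>2 / \<tau>\<^sup>2)"
  proof (rule sum_mono)
    fix y assume y: "y \<in> {y\<in>A. \<tau> \<le> \<bar>f y\<bar>}"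
    have "\<tau>\<^sup>2 \<le> (f y)\<^sup>2" using y assms(3)
      by (metis (mono_tags) abs_le_square_iff abs_of_pos mem_Collect_eq)
    then have "1 \<le> (f y)\<^sup>2 / \<tau>\<^sup>2" using assms(3) by simp
    then show "P y \<le> P y * (f y)\<^sup>2 / \<tau>\<^sup>2" using assms(2)[of y] y
      by (metis mem_Collect_eq mult.right_neutral mult_left_mono times_divide_eq_right)
  qed
  also have "\<dots> \<le> (\<Sum>y\<in>A. P y * (f y)\<^sup>2 / \<tau>\<^sup>2)"
    using assms by (intro sum_mono2) auto
  finally show ?thesis by (simp add: sum_divide_distrib)
qed

lemma bhatt_event:
  fixes P Q :: "'a \<Rightarrow> real"
  assumes "finite A" "\<And>y. y \<in> A \<Longrightarrow> P y \<ge> 0" "\<And>y. y \<in> A \<Longrightarrow> Q y \<ge> 0" "c \<ge> 0"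
  shows "(\<Sum>y\<in>{y\<in>A. Q y \<le> c * P y}. Q y) \<le> sqrt c * (\<Sum>y\<in>A. sqrt (P y * Q y))"
proof -
  have "(\<Sum>y\<in>{y\<in>A. Q y \<le> c * P y}. Q y) \<le> (\<Sum>y\<in>{y\<in>A. Q y \<le> c * P y}. sqrt c * sqrt (P y * Q y))"
  proof (rule sum_mono)
    fix y assume y: "y \<in> {y\<in>A. Q y \<le> c * P y}"
    have q: "Q y \<ge> 0" "P y \<ge> 0" using y assms by auto
    have "Q y = sqrt (Q y) * sqrt (Q y)" using q by simp
    also have "\<dots> \<le> sqrt (c * P y) * sqrt (Q y)"
      using y q by (intro mult_right_mono real_sqrt_le_mono) auto
    finally show "Q y \<le> sqrt c * sqrt (P y * Q y)" by (simp add: real_sqrt_mult)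
  qed
  also have "\<dots> \<le> (\<Sum>y\<in>A. sqrt c * sqrt (P y * Q y))"
    using assms by (intro sum_mono2) (auto intro!: mult_nonneg_nonneg)
  finally show ?thesis by (simp add: sum_distrib_left)
qed

lemma sq_le_4exp: "(x::real) \<ge> 0 \<Longrightarrow> x\<^sup>2 \<le> 4 * exp x"
proof -
  assume x: "x \<ge> 0"
  have "x / 2 \<le> exp (x/2)" using exp_ge_add_one_self[of "x/2"] by linarith
  then have "(x/2)\<^sup>2 \<le> (exp (x/2))\<^sup>2" using x by (intro power_mono) auto
  also have "(exp (x/2))\<^sup>2 = exp x" by (simp add: power2_eq_square exp_add[symmetric])
  finally show ?thesis by (simp add: power2_eq_square)
qed

lemma p_ln_sq: "0 < (p::real) \<Longrightarrow> p \<le> 1 \<Longrightarrow> p * (ln p)\<^sup>2 \<le> 4"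
proof -
  assume p: "0 < p" "p \<le> 1"
  have "(- ln p)\<^sup>2 \<le> 4 * exp (- ln p)" using p by (intro sq_le_4exp) simp
  then have "(ln p)\<^sup>2 \<le> 4 / p" using p by (simp add: exp_minus divide_inverse)
  then show ?thesis using p by (simp add: field_simps)
qed

lemma neg_p_ln: "0 \<le> (p::real) \<Longrightarrow> - (p * ln p) \<le> 1"
proof (cases "p = 0")
  case False
  assume "0 \<le> p"
  then have p: "0 < p" using False by simp
  have "ln (1/p) \<le> 1/p - 1" using p by (intro ln_le_minus_one) auto
  then have "- ln p \<le> 1/p - 1" using p by (simp add: ln_div)
  then have "p * (- ln p) \<le> p * (1/p - 1)" using p by (intro mult_left_mono) auto
  moreover have "p * (1/p - 1) = 1 - p" using p by (simp add: field_simps)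
  ultimately show ?thesis using p by linarith
qed simp

lemma sqrt_prod: "sqrt (prod f A) = (\<Prod>i\<in>A. sqrt (f i))"
  by (induction A rule: infinite_finite_induct) (auto simp: real_sqrt_mult)

lemma channelD:
  assumes "channel M W" "x \<in> space M"
  shows "W x y \<ge> 0" "sum (W x) UNIV = 1" "W x y \<le> 1"
proof -
  show "W x y \<ge> 0" "sum (W x) UNIV = 1" using assms unfolding channel_def by auto
  moreover have "W x y \<le> sum (W x) UNIV"
    using assms unfolding channel_def by (intro member_le_sum) auto
  ultimately show "W x y \<le> 1" by simp
qed

lemma prod_nonneg_W: "channel M W \<Longrightarrow> \<forall>i<n. u i \<in> space M \<Longrightarrow> 0 \<le> (\<Prod>i<n. W (u i) (y i))"
  by (intro prod_nonneg) (auto intro: channelD)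

lemma total_prob: assumes "channel M W" "\<forall>i<n. u i \<in> space M"
  shows "(\<Sum>y\<in>words n. \<Prod>i<n. W (u i) (y i)) = 1"
proof -
  have "(\<Sum>y\<in>words n. \<Prod>i<n. W (u i) (y i)) = (\<Prod>i<n. \<Sum>a\<in>UNIV. W (u i) a)"
    by (rule sum_words_prod)
  also have "\<dots> = 1" using assms by (intro prod.neutral) (auto intro: channelD)
  finally show ?thesis .
qed

lemma amgm_t: assumes "(t::real) > 0" shows "x * y \<le> (t * x\<^sup>2 + y\<^sup>2 / t) / 2"
proof -
  have "0 \<le> (t*x - y)\<^sup>2" by simp
  then have "2 * (x*y) * t \<le> (t * x)\<^sup>2 + y\<^sup>2" by (simp add: power2_eq_square algebra_simps)
  then have "2 * (x*y) \<le> ((t*x)\<^sup>2 + y\<^sup>2) / t" using assms by (simp add: field_simps)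
  also have "((t*x)\<^sup>2 + y\<^sup>2) / t = t * x\<^sup>2 + y\<^sup>2 / t" using assms by (simp add: field_simps power2_eq_square)
  finally show ?thesis by simp
qed

lemma diff_sq_bound:
  assumes "(a::real) \<ge> 0" "b \<ge> 0" "t > 0"
  shows "a\<^sup>2 - b\<^sup>2 \<le> t * (a - b)\<^sup>2 / 2 + (a + b)\<^sup>2 / (2 * t)"
proof -
  have "a\<^sup>2 - b\<^sup>2 = (a - b) * (a + b)" by (simp add: power2_eq_square algebra_simps)
  also have "\<dots> \<le> \<bar>a - b\<bar> * (a + b)" using assms by (intro mult_right_mono) auto
  also have "\<dots> \<le> (t * \<bar>a - b\<bar>\<^sup>2 + (a + b)\<^sup>2 / t) / 2" by (rule amgm_t[OF assms(3)])
  finally show ?thesis by (simp add: field_simps)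
qed

lemma upper_pair:
  fixes W :: "'x \<Rightarrow> 'y::finite \<Rightarrow> real"
  assumes ch: "channel M W" and u: "\<forall>i<n. u i \<in> space M" and v: "\<forall>i<n. v i \<in> space M"
    and n: "n > 0" and d: "\<delta> > 0" "2 * \<delta>\<^sup>2 \<le> 1"
    and close: "\<forall>i<n. dist (\<chi> y. sqrt (W (u i) y)) (\<chi> y. sqrt (W (v i) y)) \<le> 2 * \<delta>"
    and E: "E \<subseteq> words n"
  shows "prodW W n u E - prodW W n v E \<le> 4 * \<delta> * sqrt n"
proof -
  define P where "P y = (\<Prod>i<n. W (u i) (y i))" for y :: "nat \<Rightarrow> 'y"
  define Q where "Q y = (\<Prod>i<n. W (v i) (y i))" for y :: "nat \<Rightarrow> 'y"
  have P0: "P y \<ge> 0" "Q y \<ge> 0" for y unfolding P_def Q_def using prod_nonneg_W[OF ch] u v by auto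
  define F where "F = (\<Sum>y\<in>words n. sqrt (P y * Q y))"
  define t where "t = 1 / (\<delta> * sqrt n)"
  have t: "t > 0" using d n by (simp add: t_def)
  have Fprod: "F = (\<Prod>i<n. \<Sum>a\<in>UNIV. sqrt (W (u i) a * W (v i) a))"
  proof -
    have "F = (\<Sum>y\<in>words n. \<Prod>i<n. sqrt (W (u i) (y i) * W (v i) (y i)))"
      unfolding F_def P_def Q_def
      by (simp add: prod.distrib[symmetric] sqrt_prod flip: real_sqrt_mult)
    also have "\<dots> = (\<Prod>i<n. \<Sum>a\<in>UNIV. sqrt (W (u i) a * W (v i) a))"
      by (rule sum_words_prod)
    finally show ?thesis .
  qed
  have Bi: "(\<Sum>a\<in>UNIV. sqrt (W (u i) a * W (v i) a)) \<ge> 1 - 2 * \<delta>\<^sup>2"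
       "(\<Sum>a\<in>UNIV. sqrt (W (u i) a * W (v i) a)) \<le> 1" if i: "i < n" for i
  proof -
    have eq: "(\<Sum>a\<in>UNIV. sqrt (W (u i) a * W (v i) a)) = 1 - (dist (\<chi> y. sqrt (W (u i) y)) (\<chi> y. sqrt (W (v i) y)))\<^sup>2 / 2"
      unfolding dist_sq_sqrt using u v i ch by (intro bhatt) (auto intro: channelD)
    have "(dist (\<chi> y. sqrt (W (u i) y)) (\<chi> y. sqrt (W (v i) y)))\<^sup>2 \<le> (2*\<delta>)\<^sup>2"
      using close i by (intro power_mono) auto
    then show "(\<Sum>a\<in>UNIV. sqrt (W (u i) a * W (v i) a)) \<ge> 1 - 2 * \<delta>\<^sup>2" unfolding eq
      by (simp add: power2_eq_square)
    show "(\<Sum>a\<in>UNIV. sqrt (W (u i) a * W (v i) a)) \<le> 1" unfolding eq by simp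
  qed
  have F1: "F \<le> 1" unfolding Fprod
  proof (intro prod_le_1 conjI)
    fix i assume "i \<in> {..<n}"
    then show "0 \<le> (\<Sum>a\<in>UNIV. sqrt (W (u i) a * W (v i) a))" using Bi(1)[of i] d by simp
    show "(\<Sum>a\<in>UNIV. sqrt (W (u i) a * W (v i) a)) \<le> 1" using Bi(2)[of i] \<open>i \<in> {..<n}\<close> by simp
  qed
  have "(1 - 2 * \<delta>\<^sup>2) ^ n \<le> F"
  proof -
    have "(1 - 2 * \<delta>\<^sup>2) ^ n = (\<Prod>i<n. 1 - 2 * \<delta>\<^sup>2)" by simp
    also have "\<dots> \<le> (\<Prod>i<n. \<Sum>a\<in>UNIV. sqrt (W (u i) a * W (v i) a))"
      using Bi d by (intro prod_mono) auto
    finally show ?thesis using Fprod by simp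
  qed
  moreover have "1 + real n * (- 2 * \<delta>\<^sup>2) \<le> (1 + (- 2 * \<delta>\<^sup>2)) ^ n"
    using d by (intro Bernoulli_inequality) auto
  ultimately have F2: "1 - F \<le> 2 * n * \<delta>\<^sup>2" by simp
  have sP: "sum P (words n) = 1" "sum Q (words n) = 1" unfolding P_def Q_def using total_prob[OF ch] u v by auto
  have "prodW W n u E - prodW W n v E = (\<Sum>y\<in>E. (sqrt (P y))\<^sup>2 - (sqrt (Q y))\<^sup>2)"
    unfolding prodW_def P_def Q_def using E P0 unfolding P_def Q_def
    by (simp add: Int_absorb2 sum_subtractf)
  also have "\<dots> \<le> (\<Sum>y\<in>E. t * (sqrt (P y) - sqrt (Q y))\<^sup>2 / 2 + (sqrt (P y) + sqrt (Q y))\<^sup>2 / (2 * t))"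
    by (intro sum_mono diff_sq_bound t) (auto simp: P0)
  also have "\<dots> \<le> (\<Sum>y\<in>words n. t * (sqrt (P y) - sqrt (Q y))\<^sup>2 / 2 + (sqrt (P y) + sqrt (Q y))\<^sup>2 / (2 * t))"
    using E t by (intro sum_mono2) auto
  also have "\<dots> = t * (\<Sum>y\<in>words n. P y + Q y - 2 * sqrt (P y * Q y)) / 2
        + (\<Sum>y\<in>words n. P y + Q y + 2 * sqrt (P y * Q y)) / (2 * t)"
  proof -
    have pt: "t * (sqrt (P y) - sqrt (Q y))\<^sup>2 / 2 + (sqrt (P y) + sqrt (Q y))\<^sup>2 / (2 * t)
       = t * (P y + Q y - 2 * sqrt (P y * Q y)) / 2 + (P y + Q y + 2 * sqrt (P y * Q y)) / (2 * t)" for y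
      using P0[of y] by (simp add: power2_eq_square algebra_simps real_sqrt_mult)
    have gen: "(\<Sum>y\<in>A. t * X y / 2 + Y y / (2 * t)) = t * (\<Sum>y\<in>A. X y) / 2 + (\<Sum>y\<in>A. Y y) / (2 * t)"
      for A :: "(nat \<Rightarrow> 'y) set" and X Y
      by (simp add: sum.distrib sum_divide_distrib sum_distrib_left)
    show ?thesis unfolding pt by (rule gen)
  qed
  also have "\<dots> = t * (1 - F) + (1 + F) / t"
  proof -
    have h1: "(\<Sum>y\<in>words n. P y + Q y - 2 * sqrt (P y * Q y)) = 2 - 2 * F"
      using sP by (simp add: sum.distrib sum_subtractf sum_distrib_left F_def)
    have h2: "(\<Sum>y\<in>words n. P y + Q y + 2 * sqrt (P y * Q y)) = 2 + 2 * F"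
      using sP by (simp add: sum.distrib sum_distrib_left F_def)
    show ?thesis unfolding h1 h2 using t by (simp add: field_simps)
  qed
  also have "\<dots> \<le> t * (2 * n * \<delta>\<^sup>2) + 2 / t"
    using F1 F2 t by (intro add_mono mult_left_mono divide_right_mono) auto
  also have "\<dots> = 4 * \<delta> * sqrt n"
    using d n by (simp add: t_def field_simps power2_eq_square)
  finally show ?thesis .
qed

lemma sqrt_X_bounded:
  assumes ch: "channel M W"
  shows "bounded (sqrt_X M W)"
  unfolding bounded_iff
proof (intro exI ballI)
  fix z assume "z \<in> sqrt_X M W"
  then obtain x where x: "x \<in> space M" "z = (\<chi> y. sqrt (W x y))" unfolding sqrt_X_def by auto
  have "norm z \<le> (\<Sum>i\<in>UNIV. \<bar>z $ i\<bar>)" by (rule norm_le_l1_cart)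
  also have "\<dots> \<le> (\<Sum>i\<in>(UNIV::'b set). 1)"
    using x channelD[OF ch x(1)] by (intro sum_mono) auto
  finally show "norm z \<le> real CARD('b)" by simp
qed

lemma cover_exists:
  assumes ch: "channel M W" and d: "\<delta> > 0"
  shows "\<exists>C. finite C \<and> C \<subseteq> sqrt_X M W \<and> sqrt_X M W \<subseteq> (\<Union>c\<in>C. cball c \<delta>)"
proof -
  let ?F = "sqrt_X M W"
  have cpt: "compact (closure ?F)" using sqrt_X_bounded[OF ch] by simp
  have "closure ?F \<subseteq> (\<Union>c\<in>?F. ball c \<delta>)"
  proof
    fix z assume "z \<in> closure ?F"
    then obtain c where "c \<in> ?F" "dist c z < \<delta>" using d closure_approachable by metis
    then show "z \<in> (\<Union>c\<in>?F. ball c \<delta>)" by auto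
  qed
  then obtain C where C: "C \<subseteq> ?F" "finite C" "closure ?F \<subseteq> (\<Union>c\<in>C. ball c \<delta>)"
    using compactE_image[OF cpt, of ?F "\<lambda>c. ball c \<delta>"] by auto
  have "?F \<subseteq> (\<Union>c\<in>C. cball c \<delta>)" using C(3) closure_subset[of ?F] ball_subset_cball by blast
  then show ?thesis using C by blast
qed

lemma cover_num_ex:
  assumes ch: "channel M W" and d: "\<delta> > 0"
  shows "\<exists>C. finite C \<and> card C = cover_num (sqrt_X M W) \<delta> \<and> C \<subseteq> sqrt_X M W \<and> sqrt_X M W \<subseteq> (\<Union>c\<in>C. cball c \<delta>)"
proof -
  obtain C where "finite C \<and> C \<subseteq> sqrt_X M W \<and> sqrt_X M W \<subseteq> (\<Union>c\<in>C. cball c \<delta>)"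
    using cover_exists[OF ch d] by blast
  then have "\<exists>k. \<exists>C. finite C \<and> card C = k \<and> C \<subseteq> sqrt_X M W \<and> sqrt_X M W \<subseteq> (\<Union>c\<in>C. cball c \<delta>)"
    by blast
  then show ?thesis unfolding cover_num_def by (rule LeastI_ex)
qed

lemma cover_num_le:
  assumes "finite C" "C \<subseteq> F" "F \<subseteq> (\<Union>c\<in>C. cball c \<delta>)"
  shows "cover_num F \<delta> \<le> card C"
  unfolding cover_num_def using assms by (intro Least_le) auto

lemma cover_num_mono:
  assumes ch: "channel M W" and d: "0 < \<delta>" "\<delta> \<le> \<delta>'"
  shows "cover_num (sqrt_X M W) \<delta>' \<le> cover_num (sqrt_X M W) \<delta>"
proof -
  obtain C where C: "finite C" "card C = cover_num (sqrt_X M W) \<delta>" "C \<subseteq> sqrt_X M W"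
     "sqrt_X M W \<subseteq> (\<Union>c\<in>C. cball c \<delta>)" using cover_num_ex[OF ch d(1)] by blast
  have "cball c \<delta> \<subseteq> cball c \<delta>'" for c using d(2) by (rule subset_cball)
  then have "sqrt_X M W \<subseteq> (\<Union>c\<in>C. cball c \<delta>')" using C(4) by blast
  then show ?thesis using cover_num_le[OF C(1) C(3)] C(2) by simp
qed

lemma cover_num_pos:
  assumes ch: "channel M W" and d: "0 < \<delta>" and ne: "space M \<noteq> {}"
  shows "cover_num (sqrt_X M W) \<delta> \<ge> 1"
proof -
  obtain C where C: "finite C" "card C = cover_num (sqrt_X M W) \<delta>" "C \<subseteq> sqrt_X M W"
     "sqrt_X M W \<subseteq> (\<Union>c\<in>C. cball c \<delta>)" using cover_num_ex[OF ch d(1)] by blast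
  have "sqrt_X M W \<noteq> {}" using ne unfolding sqrt_X_def by auto
  then have "C \<noteq> {}" using C(4) by auto
  then have "card C > 0" using C(1) by (simp add: card_gt_0_iff)
  then show ?thesis using C(2) by simp
qed

lemma code_bound:
  fixes W :: "'x \<Rightarrow> 'y::finite \<Rightarrow> real"
  assumes ch: "channel M W" and n: "n > 0" and d: "\<delta> > 0" "2 * \<delta>\<^sup>2 \<le> 1"
    and small: "4 * \<delta> * sqrt n < 1 - l1 - l2"
    and code: "DI_code M W n N l1 l2 u E"
  shows "N \<le> cover_num (sqrt_X M W) \<delta> ^ n"
proof -
  obtain C where C: "finite C" "card C = cover_num (sqrt_X M W) \<delta>" "C \<subseteq> sqrt_X M W"
     "sqrt_X M W \<subseteq> (\<Union>c\<in>C. cball c \<delta>)" using cover_num_ex[OF ch d(1)] by blast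
  let ?s = "\<lambda>x. (\<chi> y. sqrt (W x y)) :: real^'y"
  define cen where "cen x = (SOME c. c \<in> C \<and> dist (?s x) c \<le> \<delta>)" for x
  have cen: "cen x \<in> C \<and> dist (?s x) (cen x) \<le> \<delta>" if "x \<in> space M" for x
  proof -
    have "?s x \<in> sqrt_X M W" using that unfolding sqrt_X_def by auto
    then obtain c where "c \<in> C" "dist c (?s x) \<le> \<delta>" using C(4) by (auto simp: mem_cball)
    then have "\<exists>c. c \<in> C \<and> dist (?s x) c \<le> \<delta>" by (auto simp: dist_commute)
    then show ?thesis unfolding cen_def by (rule someI_ex)
  qed
  have uM: "\<forall>i<n. u j i \<in> space M" if "j < N" for j using code that unfolding DI_code_def by auto
  define phi where "phi j = restrict (\<lambda>i. cen (u j i)) {..<n}" for j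
  have inj: "inj_on phi {..<N}"
  proof (rule inj_onI, rule ccontr)
    fix j k assume j: "j \<in> {..<N}" and k: "k \<in> {..<N}" and eq: "phi j = phi k" and ne: "j \<noteq> k"
    have close: "\<forall>i<n. dist (?s (u j i)) (?s (u k i)) \<le> 2 * \<delta>"
    proof (intro allI impI)
      fix i assume i: "i < n"
      have "cen (u j i) = cen (u k i)" using fun_cong[OF eq, of i] i by (simp add: phi_def)
      then have "dist (?s (u j i)) (?s (u k i)) \<le> dist (?s (u j i)) (cen (u j i)) + dist (?s (u k i)) (cen (u j i))"
        by (metis dist_commute dist_triangle)
      also have "\<dots> \<le> 2 * \<delta>" using cen[of "u j i"] cen[of "u k i"] uM[of j] uM[of k] j k i
        \<open>cen (u j i) = cen (u k i)\<close> by auto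
      finally show "dist (?s (u j i)) (?s (u k i)) \<le> 2 * \<delta>" .
    qed
    have Ej: "E j \<subseteq> words n" using code j unfolding DI_code_def by auto
    have "prodW W n (u j) (E j) - prodW W n (u k) (E j) \<le> 4 * \<delta> * sqrt n"
      using upper_pair[OF ch uM[of j] uM[of k] n d close Ej] j k by auto
    moreover have "prodW W n (u j) (E j) \<ge> 1 - l1" "prodW W n (u k) (E j) \<le> l2"
      using code j k ne unfolding DI_code_def by auto
    ultimately show False using small by linarith
  qed
  have ph: "phi j \<in> PiE {..<n} (\<lambda>_. C)" if "j < N" for j
    unfolding phi_def by (rule restrict_PiE_iff[THEN iffD2]) (use cen uM that in auto)
  have "phi ` {..<N} \<subseteq> PiE {..<n} (\<lambda>_. C)"
    using ph by auto
  then have "card (phi ` {..<N}) \<le> card (PiE {..<n} (\<lambda>_. C))"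
    using C(1) by (intro card_mono finite_PiE) auto
  then show ?thesis using card_image[OF inj] C(2) by (simp add: card_PiE)
qed

lemma N_DI_ge: "DI_code M W n N l1 l2 u E \<Longrightarrow> ereal (real N) \<le> N_DI M W n l1 l2"
  unfolding N_DI_def by (rule SUP_upper) auto

lemma N_DI_le: "(\<And>N u E. DI_code M W n N l1 l2 u E \<Longrightarrow> real N \<le> B) \<Longrightarrow> N_DI M W n l1 l2 \<le> ereal B"
  unfolding N_DI_def by (rule SUP_least) auto

lemma code_one:
  assumes ch: "channel M W" and x0: "x0 \<in> space M" and l1: "0 \<le> l1"
  shows "DI_code M W n 1 l1 l2 (\<lambda>j i. x0) (\<lambda>j. words n)"
proof -
  have "prodW W n (\<lambda>i. x0) (words n) = 1"
    unfolding prodW_def using total_prob[OF ch, of n "\<lambda>i. x0"] x0 by simp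
  then show ?thesis unfolding DI_code_def using x0 l1 by auto
qed

lemma N_DI_ge1:
  assumes ch: "channel M W" and ne: "space M \<noteq> {}" and l1: "0 \<le> l1"
  shows "1 \<le> N_DI M W n l1 l2"
proof -
  obtain x0 where "x0 \<in> space M" using ne by auto
  from N_DI_ge[OF code_one[OF ch this l1]] show ?thesis by (simp add: one_ereal_def)
qed

lemma DI_rate_ln:
  assumes "N_DI M W n l1 l2 = ereal r"
  shows "DI_rate M W l1 l2 n = ereal (ln r / (real n * ln (real n)))"
  using assms unfolding DI_rate_def by (simp add: log_def field_simps)

lemma rate_upper:
  assumes ch: "channel M W" and ne: "space M \<noteq> {}" and l1: "0 \<le> l1" and n: "n \<ge> 2"
    and K: "(K::nat) \<ge> 1" and bound: "\<And>N u E. DI_code M W n N l1 l2 u E \<Longrightarrow> N \<le> K ^ n"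
  shows "DI_rate M W l1 l2 n \<le> ereal (ln (real K) / ln n)"
proof -
  have le: "N_DI M W n l1 l2 \<le> ereal (real (K ^ n))" by (rule N_DI_le) (use bound in auto)
  have ge: "1 \<le> N_DI M W n l1 l2" by (rule N_DI_ge1[OF ch ne l1])
  obtain r where r: "N_DI M W n l1 l2 = ereal r" using le ge by (cases "N_DI M W n l1 l2") auto
  have r1: "1 \<le> r" "r \<le> real K ^ n" using le ge r by auto
  have lnn: "ln (real n) > 0" using n by simp
  have "ln r \<le> ln (real K ^ n)" using r1 by (intro ln_mono) auto
  also have "\<dots> = n * ln (real K)" using K by (simp add: ln_realpow)
  finally have "ln r / (real n * ln (real n)) \<le> n * ln (real K) / (real n * ln (real n))"
    using lnn n by (intro divide_right_mono) auto
  also have "\<dots> = ln (real K) / ln n" using n by simp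
  finally show ?thesis using DI_rate_ln[OF r] by simp
qed

lemma rate_lower:
  assumes code: "DI_code M W n N l1 l2 u E" and n: "n \<ge> 2" and N: "N \<ge> 1"
  shows "ereal (ln N / (real n * ln n)) \<le> DI_rate M W l1 l2 n"
proof (cases "N_DI M W n l1 l2")
  case (real r)
  have "ereal N \<le> ereal r" using N_DI_ge[OF code] real by simp
  then have "ln N \<le> ln r" using N by simp
  then have "ln N / (real n * ln n) \<le> ln r / (real n * ln n)"
    using n by (intro divide_right_mono) auto
  then show ?thesis using DI_rate_ln[OF real] by simp
next
  case PInf
  then show ?thesis unfolding DI_rate_def by simp
next
  case MInf
  then show ?thesis using N_DI_ge[OF code] by simp
qed

lemma ratio_ln: "0 < d \<Longrightarrow> log 2 x / (- log 2 d) = ln x / (- ln d)"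
  by (simp add: log_def field_simps)

lemma dim_nonneg:
  assumes ch: "channel M W" and ne: "space M \<noteq> {}"
  shows "0 \<le> lower_minkowski_dim (sqrt_X M W)"
  unfolding lower_minkowski_dim_def
proof (rule Liminf_bounded)
  show "\<forall>\<^sub>F d in at_right 0. 0 \<le> ereal (log 2 (real (cover_num (sqrt_X M W) d)) / - log 2 d)"
    unfolding eventually_at_right_field
  proof (intro exI[of _ 1] conjI allI impI)
    fix d :: real assume d: "0 < d" "d < 1"
    have "1 \<le> cover_num (sqrt_X M W) d" using cover_num_pos[OF ch d(1) ne] .
    then have "0 \<le> log 2 (real (cover_num (sqrt_X M W) d))" by simp
    moreover have "0 < - log 2 d" using d by simp
    ultimately have "0 \<le> log 2 (real (cover_num (sqrt_X M W) d)) / - log 2 d" by (rule divide_nonneg_pos)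
    then show "0 \<le> ereal (log 2 (real (cover_num (sqrt_X M W) d)) / - log 2 d)" by (simp only: zero_ereal_def ereal_less_eq)
  qed simp
qed

lemma ln_ratio_eventually:
  assumes c: "c > 0" and e: "e > 0"
  shows "\<exists>K1. \<forall>n\<ge>K1. ln ((real n + 1) / c) \<le> (1 + e) * ln (real n)"
proof -
  have lim: "filterlim (\<lambda>n. ln (real n)) at_top sequentially"
    by (rule filterlim_compose[OF ln_at_top filterlim_real_sequentially])
  have "eventually (\<lambda>n. (ln 2 - ln c) / e \<le> ln (real n)) sequentially"
    using lim unfolding filterlim_at_top by auto
  moreover have "eventually (\<lambda>n. n \<ge> (1::nat)) sequentially" by (rule eventually_ge_at_top)
  ultimately have "eventually (\<lambda>n. ln ((real n + 1) / c) \<le> (1 + e) * ln (real n)) sequentially"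
  proof eventually_elim
    case (elim n)
    have "ln ((real n + 1) / c) = ln (real n + 1) - ln c" using c by (simp add: ln_div)
    also have "\<dots> \<le> ln (2 * real n) - ln c" using elim by (intro diff_right_mono ln_mono) auto
    also have "\<dots> = ln 2 + ln (real n) - ln c" using elim by (simp add: ln_mult)
    also have "\<dots> \<le> e * ln (real n) + ln (real n)" using elim e by (simp add: field_simps)
    finally show ?case by (simp add: algebra_simps)
  qed
  then show ?thesis unfolding eventually_sequentially by blast
qed

lemma upper_key:
  fixes W :: "'x \<Rightarrow> 'y::finite \<Rightarrow> real"
  assumes ch: "channel M W" and ne: "space M \<noteq> {}" and l: "0 < l1" "0 < l2" "l1 + l2 < 1"
    and b: "b > 0" and e: "e > 0" and D: "lower_minkowski_dim (sqrt_X M W) < ereal b"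
  shows "liminf (DI_rate M W l1 l2) \<le> ereal (b * (1 + e) / 2)"
proof (rule ccontr)
  define B where "B = b * (1 + e) / 2"
  define \<gamma> where "\<gamma> = 1 - l1 - l2"
  define c where "c = \<gamma>\<^sup>2 / 64"
  let ?G = "cover_num (sqrt_X M W)"
  have g: "\<gamma> > 0" "\<gamma> \<le> 1" using l by (auto simp: \<gamma>_def)
  have c: "c > 0" "c \<le> 1/64" using g by (auto simp: c_def power_le_one)
  assume "\<not> liminf (DI_rate M W l1 l2) \<le> ereal (b * (1 + e) / 2)"
  then have "ereal B < liminf (DI_rate M W l1 l2)" by (simp add: B_def)
  then have "eventually (\<lambda>n. ereal B < DI_rate M W l1 l2 n) sequentially" by (rule less_LiminfD)
  then obtain N0 where N0: "\<And>n. n \<ge> N0 \<Longrightarrow> ereal B < DI_rate M W l1 l2 n"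
    unfolding eventually_sequentially by blast
  obtain K1 where K1: "\<And>n. n \<ge> K1 \<Longrightarrow> ln ((real n + 1) / c) \<le> (1 + e) * ln (real n)"
    using ln_ratio_eventually[OF c(1) e] by blast
  define Nb where "Nb = max N0 (max 2 K1)"
  define \<epsilon> where "\<epsilon> = min (1/2) (sqrt (c / (real Nb + 1)))"
  have eps: "\<epsilon> > 0" using c by (simp add: \<epsilon>_def)
  have ne_ev: "\<not> eventually (\<lambda>d. ereal b \<le> ereal (log 2 (real (?G d)) / - log 2 d)) (at_right 0)"
  proof
    assume "eventually (\<lambda>d. ereal b \<le> ereal (log 2 (real (?G d)) / - log 2 d)) (at_right 0)"
    then have "ereal b \<le> lower_minkowski_dim (sqrt_X M W)"
      unfolding lower_minkowski_dim_def by (rule Liminf_bounded)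
    then show False using D by simp
  qed
  obtain \<delta> where del: "0 < \<delta>" "\<delta> < \<epsilon>" and rat: "log 2 (real (?G \<delta>)) / - log 2 \<delta> < b"
  proof -
    have "\<not> (\<forall>y>0. y < \<epsilon> \<longrightarrow> ereal b \<le> ereal (log 2 (real (?G y)) / - log 2 y))"
      using ne_ev eps unfolding eventually_at_right_field by blast
    then obtain y where "y > 0" "y < \<epsilon>" "\<not> ereal b \<le> ereal (log 2 (real (?G y)) / - log 2 y)" by blast
    then show ?thesis using that[of y] by simp
  qed
  have d1: "\<delta> < 1/2" and d2: "\<delta> < sqrt (c / (real Nb + 1))" using del by (auto simp: \<epsilon>_def)
  have "\<delta>\<^sup>2 < c / (real Nb + 1)"
  proof -
    have "\<delta>\<^sup>2 < (sqrt (c / (real Nb + 1)))\<^sup>2" using d2 del(1) by (intro power_strict_mono) auto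
    then show ?thesis using c by simp
  qed
  then have cd: "real Nb + 1 < c / \<delta>\<^sup>2" using del(1) c by (simp add: field_simps)
  define n where "n = nat \<lfloor>c / \<delta>\<^sup>2\<rfloor>"
  have n1: "real n \<le> c / \<delta>\<^sup>2" "c / \<delta>\<^sup>2 < real n + 1"
    using cd unfolding n_def by (auto simp: of_nat_nat)
  have nNb: "n \<ge> Nb" using cd n1 by linarith
  then have n2: "n \<ge> 2" "n \<ge> N0" "n \<ge> K1" by (auto simp: Nb_def)
  define \<delta>n where "\<delta>n = sqrt (c / real n)"
  have dn: "\<delta>n > 0" "\<delta> \<le> \<delta>n" "2 * \<delta>n\<^sup>2 \<le> 1" "4 * \<delta>n * sqrt n < 1 - l1 - l2"
  proof -
    show "\<delta>n > 0" using c n2 by (simp add: \<delta>n_def)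
    have "\<delta>\<^sup>2 \<le> c / real n" using n1 del(1) n2 by (simp add: field_simps)
    then show "\<delta> \<le> \<delta>n" unfolding \<delta>n_def using del(1) by (simp add: real_le_rsqrt)
    show "2 * \<delta>n\<^sup>2 \<le> 1" using c n2 by (simp add: \<delta>n_def field_simps)
    have "4 * \<delta>n * sqrt n = 4 * sqrt c" using n2 c by (simp add: \<delta>n_def real_sqrt_divide)
    also have "\<dots> = \<gamma> / 2" using g by (simp add: c_def real_sqrt_divide)
    finally show "4 * \<delta>n * sqrt n < 1 - l1 - l2" using g by (simp add: \<gamma>_def)
  qed
  have K: "?G \<delta>n \<ge> 1" using cover_num_pos[OF ch dn(1) ne] .
  have r1: "DI_rate M W l1 l2 n \<le> ereal (ln (real (?G \<delta>n)) / ln n)"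
    using rate_upper[OF ch ne _ n2(1) K] l code_bound[OF ch _ dn(1) dn(3) dn(4)] n2 by auto
  have r2: "ln (real (?G \<delta>n)) / ln n < B"
  proof -
    have lnn: "ln (real n) > 0" using n2 by simp
    have "?G \<delta>n \<le> ?G \<delta>" by (rule cover_num_mono[OF ch del(1) dn(2)])
    then have "ln (real (?G \<delta>n)) \<le> ln (real (?G \<delta>))" using K by (intro ln_mono) auto
    also have "ln (real (?G \<delta>)) < b * (- ln \<delta>)"
    proof -
      have h: "- ln \<delta> > 0" using del d1 by simp
      have q: "ln (real (?G \<delta>)) / (- ln \<delta>) < b" using rat ratio_ln[OF del(1)] by simp
      show ?thesis using pos_divide_less_eq[OF h] q by blast
    qed
    also have "- ln \<delta> < (1 + e) * ln n / 2"
    proof -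
      have "1 / \<delta>\<^sup>2 < (real n + 1) / c" using n1 c del(1) by (simp add: field_simps)
      then have "ln (1 / \<delta>\<^sup>2) < ln ((real n + 1) / c)" using del(1) c by (intro ln_less_cancel_iff[THEN iffD2]) auto
      moreover have "ln (1 / \<delta>\<^sup>2) = - 2 * ln \<delta>" using del(1) by (simp add: ln_div ln_realpow)
      ultimately show ?thesis using K1[OF n2(3)] by simp
    qed
    then have "b * (- ln \<delta>) < b * ((1 + e) * ln n / 2)" using b by (intro mult_strict_left_mono)
    finally have "ln (real (?G \<delta>n)) < b * ((1 + e) * ln n / 2)" .
    then show ?thesis using lnn by (simp add: B_def divide_less_eq field_simps)
  qed
  have "ereal (ln (real (?G \<delta>n)) / ln n) < ereal B" using r2 by simp
  with r1 have "DI_rate M W l1 l2 n < ereal B" by (rule order.strict_trans1)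
  then show False using N0[OF n2(2)] by simp
qed

lemma upper_asym:
  fixes W :: "'x \<Rightarrow> 'y::finite \<Rightarrow> real"
  assumes ch: "channel M W" and ne: "space M \<noteq> {}" and l: "0 < l1" "0 < l2" "l1 + l2 < 1"
  shows "liminf (DI_rate M W l1 l2) \<le> ereal (1/2) * lower_minkowski_dim (sqrt_X M W)"
proof -
  let ?D = "lower_minkowski_dim (sqrt_X M W)"
  have D0: "0 \<le> ?D" by (rule dim_nonneg[OF ch ne])
  show ?thesis
  proof (cases ?D)
    case PInf
    then show ?thesis by simp
  next
    case MInf
    then show ?thesis using D0 by simp
  next
    case (real d)
    have d0: "d \<ge> 0" using D0 real by simp
    have "liminf (DI_rate M W l1 l2) \<le> ereal (d/2)"
    proof (rule ereal_le_epsilon2)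
      fix e :: real assume e: "0 < e"
      have "liminf (DI_rate M W l1 l2) \<le> ereal ((d + e) * (1 + e / (d + e)) / 2)"
        using upper_key[OF ch ne l, of "d + e" "e / (d + e)"] real d0 e by simp
      also have "(d + e) * (1 + e / (d + e)) / 2 = d/2 + e" using d0 e by (simp add: field_simps)
      finally show "liminf (DI_rate M W l1 l2) \<le> ereal (d/2) + ereal e" by simp
    qed
    then show ?thesis using real by simp
  qed
qed

lemma separated_exists:
  fixes W :: "'x \<Rightarrow> 'y::finite \<Rightarrow> real"
  assumes ch: "channel M W" and d: "\<delta> > 0" and ne: "space M \<noteq> {}"
  shows "\<exists>L. L \<subseteq> space M \<and> finite L \<and> card L = cover_num (sqrt_X M W) \<delta> \<and>
     (\<forall>a\<in>L. \<forall>b\<in>L. a \<noteq> b \<longrightarrow> dist ((\<chi> y. sqrt (W a y))::real^'y) (\<chi> y. sqrt (W b y)) > \<delta>)"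
proof -
  let ?s = "\<lambda>x. ((\<chi> y. sqrt (W x y))::real^'y)"
  let ?G = "cover_num (sqrt_X M W) \<delta>"
  have "\<forall>k. k \<le> ?G \<longrightarrow> (\<exists>L. L \<subseteq> space M \<and> finite L \<and> card L = k \<and>
     (\<forall>a\<in>L. \<forall>b\<in>L. a \<noteq> b \<longrightarrow> dist (?s a) (?s b) > \<delta>))"
  proof (intro allI)
    fix k show "k \<le> ?G \<longrightarrow> (\<exists>L. L \<subseteq> space M \<and> finite L \<and> card L = k \<and>
     (\<forall>a\<in>L. \<forall>b\<in>L. a \<noteq> b \<longrightarrow> dist (?s a) (?s b) > \<delta>))"
    proof (induction k)
      case 0
      then show ?case by (intro impI exI[of _ "{}"]) auto
    next
      case (Suc k)
      show ?case
      proof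
        assume k: "Suc k \<le> ?G"
        then obtain L where L: "L \<subseteq> space M" "finite L" "card L = k"
          "\<forall>a\<in>L. \<forall>b\<in>L. a \<noteq> b \<longrightarrow> dist (?s a) (?s b) > \<delta>" using Suc by auto
        have "\<exists>x\<in>space M. \<forall>a\<in>L. dist (?s x) (?s a) > \<delta>"
        proof (rule ccontr)
          assume "\<not> (\<exists>x\<in>space M. \<forall>a\<in>L. dist (?s x) (?s a) > \<delta>)"
          then have cov: "\<forall>x\<in>space M. \<exists>a\<in>L. dist (?s x) (?s a) \<le> \<delta>" by (auto simp: not_less)
          have "sqrt_X M W \<subseteq> (\<Union>c\<in>?s ` L. cball c \<delta>)"
          proof
            fix z assume "z \<in> sqrt_X M W"
            then obtain x where x: "x \<in> space M" "z = ?s x" unfolding sqrt_X_def by auto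
            then obtain a where "a \<in> L" "dist (?s x) (?s a) \<le> \<delta>" using cov by auto
            then show "z \<in> (\<Union>c\<in>?s ` L. cball c \<delta>)" using x by (auto simp: dist_commute)
          qed
          moreover have "?s ` L \<subseteq> sqrt_X M W" using L(1) unfolding sqrt_X_def by auto
          ultimately have "?G \<le> card (?s ` L)" using L(2) by (intro cover_num_le) auto
          also have "\<dots> \<le> k" using L(2,3) card_image_le by blast
          finally show False using k by simp
        qed
        then obtain x where x: "x \<in> space M" "\<forall>a\<in>L. dist (?s x) (?s a) > \<delta>" by blast
        have xL: "x \<notin> L" using x(2) d by fastforce
        show "\<exists>L. L \<subseteq> space M \<and> finite L \<and> card L = Suc k \<and>
          (\<forall>a\<in>L. \<forall>b\<in>L. a \<noteq> b \<longrightarrow> dist (?s a) (?s b) > \<delta>)"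
          using L x xL by (intro exI[of _ "insert x L"]) (auto simp: dist_commute)
      qed
    qed
  qed
  then show ?thesis by blast
qed

lemma ball_card:
  fixes L :: "'a set"
  assumes L: "finite L" "card L = K" "K \<ge> 1"
  shows "card {v \<in> PiE {..<n} (\<lambda>_. L). card {i. i < n \<and> c i \<noteq> v i} < D0} \<le> 2 ^ n * K ^ D0"
proof -
  let ?B = "{v \<in> PiE {..<n} (\<lambda>_. L). card {i. i < n \<and> c i \<noteq> v i} < D0}"
  let ?T = "\<lambda>S. {v \<in> PiE {..<n} (\<lambda>_. L). \<forall>i\<in>{..<n} - S. v i = c i}"
  have sub: "?B \<subseteq> (\<Union>S\<in>{S. S \<subseteq> {..<n} \<and> card S < D0}. ?T S)"
  proof
    fix v assume v: "v \<in> ?B"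
    let ?S = "{i. i < n \<and> c i \<noteq> v i}"
    have "?S \<subseteq> {..<n} \<and> card ?S < D0" using v by auto
    moreover have "v \<in> ?T ?S" using v by auto
    ultimately show "v \<in> (\<Union>S\<in>{S. S \<subseteq> {..<n} \<and> card S < D0}. ?T S)" by blast
  qed
  have T: "card (?T S) \<le> K ^ D0" if S: "S \<subseteq> {..<n}" "card S < D0" for S
  proof -
    have inj: "inj_on (\<lambda>v. restrict v S) (?T S)"
    proof (rule inj_onI)
      fix v1 v2 assume v1: "v1 \<in> ?T S" and v2: "v2 \<in> ?T S" and eq: "restrict v1 S = restrict v2 S"
      show "v1 = v2"
      proof
        fix i
        show "v1 i = v2 i"
        proof (cases "i \<in> S")
          case True then show ?thesis using fun_cong[OF eq, of i] by simp
        next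
          case False
          show ?thesis
          proof (cases "i < n")
            case True then show ?thesis using v1 v2 False by auto
          next
            case False then show ?thesis using v1 v2 by (auto simp: PiE_def extensional_def)
          qed
        qed
      qed
    qed
    have "(\<lambda>v. restrict v S) ` (?T S) \<subseteq> PiE S (\<lambda>_. L)" using S by (auto simp: PiE_iff)
    then have "card ((\<lambda>v. restrict v S) ` (?T S)) \<le> card (PiE S (\<lambda>_. L))"
      using L S finite_subset[of S "{..<n}"] by (intro card_mono finite_PiE) auto
    also have "\<dots> = K ^ card S" using L S finite_subset[of S "{..<n}"] by (simp add: card_PiE)
    also have "\<dots> \<le> K ^ D0" using L S by (intro power_increasing) auto
    finally show ?thesis using card_image[OF inj] by simp
  qed
  have fin: "finite {S. S \<subseteq> {..<n} \<and> card S < D0}" by auto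
  have "card ?B \<le> card (\<Union>S\<in>{S. S \<subseteq> {..<n} \<and> card S < D0}. ?T S)"
    using sub L by (intro card_mono) (auto intro!: finite_PiE)
  also have "\<dots> \<le> (\<Sum>S\<in>{S. S \<subseteq> {..<n} \<and> card S < D0}. card (?T S))"
    by (rule card_UN_le[OF fin])
  also have "\<dots> \<le> (\<Sum>S\<in>{S. S \<subseteq> {..<n} \<and> card S < D0}. K ^ D0)"
    using T by (intro sum_mono) auto
  also have "\<dots> = card {S. S \<subseteq> {..<n} \<and> card S < D0} * K ^ D0" by simp
  also have "\<dots> \<le> card (Pow {..<n::nat}) * K ^ D0"
    by (intro mult_right_mono card_mono) auto
  also have "\<dots> = 2 ^ n * K ^ D0" by (simp add: card_Pow)
  finally show ?thesis .
qed

lemma GV: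
  fixes L :: "'a set"
  assumes L: "finite L" "card L = K" "K \<ge> 1" and D01: "D0 \<ge> 1"
  shows "k * (2 ^ n * K ^ D0) \<le> K ^ n \<Longrightarrow> \<exists>C. C \<subseteq> PiE {..<n} (\<lambda>_. L) \<and> card C = k \<and>
     (\<forall>u\<in>C. \<forall>v\<in>C. u \<noteq> v \<longrightarrow> card {i. i < n \<and> u i \<noteq> v i} \<ge> D0)"
proof (induction k)
  case 0
  then show ?case by (intro exI[of _ "{}"]) auto
next
  case (Suc k)
  then obtain C where C: "C \<subseteq> PiE {..<n} (\<lambda>_. L)" "card C = k"
      "\<forall>u\<in>C. \<forall>v\<in>C. u \<noteq> v \<longrightarrow> card {i. i < n \<and> u i \<noteq> v i} \<ge> D0" by auto
  let ?P = "PiE {..<n} (\<lambda>_. L)"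
  let ?B = "\<lambda>c. {v \<in> ?P. card {i. i < n \<and> c i \<noteq> v i} < D0}"
  have finP: "finite ?P" using L by (intro finite_PiE) auto
  have "card (\<Union>c\<in>C. ?B c) \<le> (\<Sum>c\<in>C. card (?B c))"
    using finite_subset[OF C(1) finP] by (rule card_UN_le)
  also have "\<dots> \<le> (\<Sum>c\<in>C. 2 ^ n * K ^ D0)" using ball_card[OF L] by (intro sum_mono) auto
  also have "\<dots> = k * (2 ^ n * K ^ D0)" using C(2) by simp
  also have "\<dots> < K ^ n"
  proof -
    have X: "0 < 2 ^ n * K ^ D0" using L by simp
    have "Suc k * (2 ^ n * K ^ D0) = k * (2 ^ n * K ^ D0) + 2 ^ n * K ^ D0" by simp
    then show ?thesis using Suc.prems X by linarith
  qed
  also have "\<dots> = card ?P" using L by (simp add: card_PiE)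
  finally have "card (\<Union>c\<in>C. ?B c) < card ?P" .
  moreover have finU: "finite (\<Union>c\<in>C. ?B c)" by (rule finite_subset[OF _ finP]) auto
  ultimately have "\<not> ?P \<subseteq> (\<Union>c\<in>C. ?B c)" by (meson card_mono not_le)
  then obtain v where v: "v \<in> ?P" "v \<notin> (\<Union>c\<in>C. ?B c)" by blast
  have vfar: "\<forall>c\<in>C. card {i. i < n \<and> c i \<noteq> v i} \<ge> D0" using v by auto
  have vC: "v \<notin> C"
  proof
    assume "v \<in> C"
    then have "card {i. i < n \<and> v i \<noteq> v i} \<ge> D0" using vfar by blast
    then have "D0 = 0" by simp
    then show False using D01 by simp
  qed
  show ?case
  proof (intro exI[of _ "insert v C"] conjI)
    show "insert v C \<subseteq> ?P" using C(1) v(1) by auto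
    show "card (insert v C) = Suc k" using C(2) vC finite_subset[OF C(1) finP] by simp
    show "\<forall>u\<in>insert v C. \<forall>w\<in>insert v C. u \<noteq> w \<longrightarrow> D0 \<le> card {i. i < n \<and> u i \<noteq> w i}"
    proof (intro ballI impI)
      fix u w assume u: "u \<in> insert v C" and w: "w \<in> insert v C" and uw: "u \<noteq> w"
      have sym: "{i. i < n \<and> w i \<noteq> v i} = {i. i < n \<and> v i \<noteq> w i}" by auto
      show "D0 \<le> card {i. i < n \<and> u i \<noteq> w i}"
        using u w uw C(3) vfar sym by (auto simp: eq_commute[of "v _"])
    qed
  qed
qed

lemma window:
  fixes f :: "'a \<Rightarrow> real"
  assumes C: "finite C" and w: "w > 0" and f: "\<And>u. u \<in> C \<Longrightarrow> 0 \<le> f u \<and> f u \<le> A"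
  shows "\<exists>C'. C' \<subseteq> C \<and> card C \<le> (nat \<lfloor>A / w\<rfloor> + 1) * card C' \<and> (\<forall>u\<in>C'. \<forall>v\<in>C'. \<bar>f u - f v\<bar> < w)"
proof -
  define Wn where "Wn = nat \<lfloor>A / w\<rfloor> + 1"
  define idx where "idx u = nat \<lfloor>f u / w\<rfloor>" for u
  define cl where "cl j = {u \<in> C. idx u = j}" for j
  have idx: "idx u < Wn" if "u \<in> C" for u
  proof -
    have "f u / w \<le> A / w" using f[OF that] w by (simp add: divide_right_mono)
    then have "\<lfloor>f u / w\<rfloor> \<le> \<lfloor>A / w\<rfloor>" by (rule floor_mono)
    then show ?thesis unfolding idx_def Wn_def by linarith
  qed
  have "C = (\<Union>j\<in>{..<Wn}. cl j)" using idx unfolding cl_def by auto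
  then have "card C \<le> (\<Sum>j\<in>{..<Wn}. card (cl j))" by (metis card_UN_le finite_lessThan)
  moreover obtain j0 where j0: "j0 \<in> {..<Wn}" "\<forall>j\<in>{..<Wn}. card (cl j) \<le> card (cl j0)"
  proof -
    have "{..<Wn} \<noteq> {}" unfolding Wn_def by auto
    then have "Max ((\<lambda>j. card (cl j)) ` {..<Wn}) \<in> (\<lambda>j. card (cl j)) ` {..<Wn}" by (intro Max_in) auto
    then obtain j0 where "j0 \<in> {..<Wn}" "card (cl j0) = Max ((\<lambda>j. card (cl j)) ` {..<Wn})" by auto
    then show ?thesis using that by (metis Max_ge finite_imageI finite_lessThan imageI)
  qed
  ultimately have "card C \<le> Wn * card (cl j0)"
    using sum_mono[of "{..<Wn}" "\<lambda>j. card (cl j)" "\<lambda>j. card (cl j0)"] by auto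
  moreover have "\<forall>u\<in>cl j0. \<forall>v\<in>cl j0. \<bar>f u - f v\<bar> < w"
  proof (intro ballI)
    fix u v assume u: "u \<in> cl j0" and v: "v \<in> cl j0"
    have fu: "0 \<le> f u" "0 \<le> f v" using u v f unfolding cl_def by auto
    have z: "0 \<le> \<lfloor>f u / w\<rfloor>" "0 \<le> \<lfloor>f v / w\<rfloor>" using fu w by auto
    have "nat \<lfloor>f u / w\<rfloor> = nat \<lfloor>f v / w\<rfloor>" using u v unfolding cl_def idx_def by auto
    then have "\<lfloor>f u / w\<rfloor> = \<lfloor>f v / w\<rfloor>" using z by (simp add: eq_nat_nat_iff)
    then have "\<bar>f u / w - f v / w\<bar> < 1" by linarith
    then have "\<bar>f u - f v\<bar> / w < 1" using w by (simp add: diff_divide_distrib[symmetric])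
    then show "\<bar>f u - f v\<bar> < w" using w by simp
  qed
  moreover have "cl j0 \<subseteq> C" unfolding cl_def by auto
  ultimately show ?thesis unfolding Wn_def by blast
qed

definition Hent :: "('y::finite \<Rightarrow> real) \<Rightarrow> real" where
  "Hent p = - (\<Sum>a\<in>UNIV. p a * ln (p a))"

definition Hs :: "('x \<Rightarrow> 'y::finite \<Rightarrow> real) \<Rightarrow> nat \<Rightarrow> (nat \<Rightarrow> 'x) \<Rightarrow> real" where
  "Hs W n u = (\<Sum>i<n. Hent (W (u i)))"

definition Etest :: "('x \<Rightarrow> 'y::finite \<Rightarrow> real) \<Rightarrow> nat \<Rightarrow> real \<Rightarrow> (nat \<Rightarrow> 'x) \<Rightarrow> (nat \<Rightarrow> 'y) set" where
  "Etest W n \<tau> u = {y \<in> words n. (\<forall>i<n. 0 < W (u i) (y i)) \<and> - Hs W n u - \<tau> \<le> (\<Sum>i<n. ln (W (u i) (y i)))}"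

lemma Hent_bounds:
  fixes W :: "'x \<Rightarrow> 'y::finite \<Rightarrow> real"
  assumes ch: "channel M W" and x: "x \<in> space M"
  shows "0 \<le> Hent (W x)" "Hent (W x) \<le> real CARD('y)"
proof -
  have t: "0 \<le> - (W x a * ln (W x a))" "- (W x a * ln (W x a)) \<le> 1" for a
  proof -
    have p: "0 \<le> W x a" "W x a \<le> 1" using channelD[OF ch x] by auto
    show "- (W x a * ln (W x a)) \<le> 1" using neg_p_ln[OF p(1)] .
    show "0 \<le> - (W x a * ln (W x a))"
    proof (cases "W x a = 0")
      case False
      then have "ln (W x a) \<le> 0" using p by simp
      then show ?thesis using p by (simp add: mult_nonneg_nonpos)
    qed simp
  qed
  have "Hent (W x) = (\<Sum>a\<in>UNIV. - (W x a * ln (W x a)))" unfolding Hent_def by (simp add: sum_negf)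
  then show "0 \<le> Hent (W x)" "Hent (W x) \<le> real CARD('y)"
    using sum_nonneg[of UNIV "\<lambda>a. - (W x a * ln (W x a))"] sum_mono[of UNIV "\<lambda>a. - (W x a * ln (W x a))" "\<lambda>_. 1"] t
    by auto
qed

lemma centered:
  fixes W :: "'x \<Rightarrow> 'y::finite \<Rightarrow> real"
  assumes ch: "channel M W" and x: "x \<in> space M"
  shows "(\<Sum>a\<in>UNIV. W x a * (ln (W x a) + Hent (W x))) = 0"
    "(\<Sum>a\<in>UNIV. W x a * (ln (W x a) + Hent (W x))\<^sup>2) \<le> 4 * real CARD('y)"
proof -
  have s1: "sum (W x) UNIV = 1" using channelD[OF ch x] by auto
  show c: "(\<Sum>a\<in>UNIV. W x a * (ln (W x a) + Hent (W x))) = 0"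
  proof -
    have "(\<Sum>a\<in>UNIV. W x a * (ln (W x a) + Hent (W x))) = (\<Sum>a\<in>UNIV. W x a * ln (W x a)) + (\<Sum>a\<in>UNIV. W x a) * Hent (W x)"
      by (simp add: distrib_left sum.distrib sum_distrib_right)
    then show ?thesis using s1 by (simp add: Hent_def)
  qed
  have "(\<Sum>a\<in>UNIV. W x a * (ln (W x a) + Hent (W x))\<^sup>2)
      = (\<Sum>a\<in>UNIV. W x a * (ln (W x a))\<^sup>2) + 2 * Hent (W x) * (\<Sum>a\<in>UNIV. W x a * ln (W x a))
        + (Hent (W x))\<^sup>2 * sum (W x) UNIV"
    by (simp add: power2_eq_square algebra_simps sum.distrib sum_distrib_left sum_distrib_right)
  also have "\<dots> = (\<Sum>a\<in>UNIV. W x a * (ln (W x a))\<^sup>2) - (Hent (W x))\<^sup>2"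
    using s1 by (simp add: Hent_def power2_eq_square)
  also have "\<dots> \<le> (\<Sum>a\<in>UNIV. W x a * (ln (W x a))\<^sup>2)" by simp
  also have "\<dots> \<le> (\<Sum>a\<in>(UNIV::'y set). 4)"
  proof (rule sum_mono)
    fix a
    have p: "0 \<le> W x a" "W x a \<le> 1" using channelD[OF ch x] by auto
    show "W x a * (ln (W x a))\<^sup>2 \<le> 4"
    proof (cases "W x a = 0")
      case False then show ?thesis using p_ln_sq[of "W x a"] p by simp
    qed simp
  qed
  finally show "(\<Sum>a\<in>UNIV. W x a * (ln (W x a) + Hent (W x))\<^sup>2) \<le> 4 * real CARD('y)" by simp
qed

lemma dev_prob:
  fixes W :: "'x \<Rightarrow> 'y::finite \<Rightarrow> real"
  assumes ch: "channel M W" and u: "\<forall>i<n. u i \<in> space M" and t: "\<tau> > 0"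
  shows "(\<Sum>y\<in>{y\<in>words n. \<tau> \<le> \<bar>\<Sum>i<n. ln (W (u i) (y i)) + Hent (W (u i))\<bar>}. \<Prod>i<n. W (u i) (y i))
     \<le> 4 * real CARD('y) * n / \<tau>\<^sup>2"
proof -
  let ?g = "\<lambda>i a. ln (W (u i) a) + Hent (W (u i))"
  have "(\<Sum>y\<in>{y\<in>words n. \<tau> \<le> \<bar>\<Sum>i<n. ?g i (y i)\<bar>}. \<Prod>i<n. W (u i) (y i))
      \<le> (\<Sum>y\<in>words n. (\<Prod>i<n. W (u i) (y i)) * (\<Sum>i<n. ?g i (y i))\<^sup>2) / \<tau>\<^sup>2"
    using prod_nonneg_W[OF ch u] t by (intro cheb) auto
  also have "(\<Sum>y\<in>words n. (\<Prod>i<n. W (u i) (y i)) * (\<Sum>i<n. ?g i (y i))\<^sup>2)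
      = (\<Sum>i<n. \<Sum>a\<in>UNIV. W (u i) a * (?g i a)\<^sup>2)"
    using u centered(1)[OF ch] channelD[OF ch] by (intro var_sum) auto
  also have "\<dots> \<le> (\<Sum>i<n. 4 * real CARD('y))"
    using u centered(2)[OF ch] by (intro sum_mono) auto
  finally show ?thesis using t by (simp add: divide_right_mono mult.commute)
qed

lemma prod_pos_all:
  fixes W :: "'x \<Rightarrow> 'y::finite \<Rightarrow> real" and n :: nat
  assumes ch: "channel M W" and u: "\<forall>i<n. u i \<in> space M" and P: "(\<Prod>i<n. W (u i) (y i)) \<noteq> 0"
  shows "\<forall>i<n. 0 < W (u i) (y i)"
proof (intro allI impI)
  fix i assume i: "i < n"
  have "W (u i) (y i) \<noteq> 0"
  proof
    assume "W (u i) (y i) = 0"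
    then have "(\<Prod>i<n. W (u i) (y i)) = 0" using i by (intro prod_zero) auto
    then show False using P by simp
  qed
  moreover have "0 \<le> W (u i) (y i)" using channelD[OF ch] u i by auto
  ultimately show "0 < W (u i) (y i)" by simp
qed

lemma ln_prod_pos: "(\<forall>i<n. 0 < f i) \<Longrightarrow> ln (\<Prod>i<(n::nat). f i) = (\<Sum>i<n. ln (f i :: real))"
proof (induction n)
  case (Suc n)
  have pos: "prod f {..<n} > 0" using Suc.prems by (intro prod_pos) auto
  have fn: "f n > 0" using Suc.prems by auto
  have "ln (\<Prod>i<Suc n. f i) = ln (prod f {..<n} * f n)" by simp
  also have "\<dots> = ln (prod f {..<n}) + ln (f n)" using pos fn by (rule ln_mult_pos)
  also have "\<dots> = (\<Sum>i<n. ln (f i)) + ln (f n)" using Suc by simp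
  finally show ?case by simp
qed simp

lemma err1:
  fixes W :: "'x \<Rightarrow> 'y::finite \<Rightarrow> real"
  assumes ch: "channel M W" and u: "\<forall>i<n. u i \<in> space M" and t: "\<tau> > 0"
  shows "prodW W n u (Etest W n \<tau> u) \<ge> 1 - 4 * real CARD('y) * n / \<tau>\<^sup>2"
proof -
  let ?P = "\<lambda>y. \<Prod>i<n. W (u i) (y i)"
  let ?g = "\<lambda>i a. ln (W (u i) a) + Hent (W (u i))"
  let ?E = "Etest W n \<tau> u"
  have Ew: "?E \<subseteq> words n" unfolding Etest_def by auto
  have P0: "0 \<le> ?P y" for y using prod_nonneg_W[OF ch u] .
  have sumg: "(\<Sum>i<n. ?g i (y i)) = (\<Sum>i<n. ln (W (u i) (y i))) + Hs W n u" for y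
    by (simp add: sum.distrib Hs_def)
  have "(\<Sum>y\<in>words n - ?E. ?P y) \<le> (\<Sum>y\<in>words n - ?E. if \<tau> \<le> \<bar>\<Sum>i<n. ?g i (y i)\<bar> then ?P y else 0)"
  proof (rule sum_mono)
    fix y assume y: "y \<in> words n - ?E"
    show "?P y \<le> (if \<tau> \<le> \<bar>\<Sum>i<n. ?g i (y i)\<bar> then ?P y else 0)"
    proof (cases "?P y = 0")
      case False
      then have pos: "\<forall>i<n. 0 < W (u i) (y i)" by (rule prod_pos_all[OF ch u])
      then have "\<not> (- Hs W n u - \<tau> \<le> (\<Sum>i<n. ln (W (u i) (y i))))" using y unfolding Etest_def by auto
      then have "\<tau> \<le> \<bar>\<Sum>i<n. ?g i (y i)\<bar>" unfolding sumg by linarith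
      then show ?thesis by simp
    next
      case True
      show ?thesis by (simp only: True) simp
    qed
  qed
  also have "\<dots> \<le> (\<Sum>y\<in>words n. if \<tau> \<le> \<bar>\<Sum>i<n. ?g i (y i)\<bar> then ?P y else 0)"
    using P0 by (intro sum_mono2) auto
  also have "\<dots> = (\<Sum>y\<in>{y\<in>words n. \<tau> \<le> \<bar>\<Sum>i<n. ?g i (y i)\<bar>}. ?P y)"
    by (simp add: sum.inter_filter)
  also have "\<dots> \<le> 4 * real CARD('y) * n / \<tau>\<^sup>2" by (rule dev_prob[OF ch u t])
  finally have A: "(\<Sum>y\<in>words n - ?E. ?P y) \<le> 4 * real CARD('y) * n / \<tau>\<^sup>2" .
  have "1 = (\<Sum>y\<in>words n. ?P y)" using total_prob[OF ch u] by simp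
  also have "\<dots> = (\<Sum>y\<in>?E. ?P y) + (\<Sum>y\<in>words n - ?E. ?P y)"
    using sum.subset_diff[OF Ew finite_words, of ?P] by linarith
  finally have "1 = (\<Sum>y\<in>?E. ?P y) + (\<Sum>y\<in>words n - ?E. ?P y)" .
  moreover have "prodW W n u ?E = (\<Sum>y\<in>?E. ?P y)" unfolding prodW_def using Ew by (simp add: Int_absorb2)
  ultimately show ?thesis using A by linarith
qed

lemma bhatt_words:
  fixes W :: "'x \<Rightarrow> 'y::finite \<Rightarrow> real"
  shows "(\<Sum>y\<in>words n. sqrt ((\<Prod>i<n. W (u i) (y i)) * (\<Prod>i<n. W (v i) (y i))))
     = (\<Prod>i<n. \<Sum>a\<in>UNIV. sqrt (W (u i) a * W (v i) a))"
proof -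
  have "(\<Sum>y\<in>words n. sqrt ((\<Prod>i<n. W (u i) (y i)) * (\<Prod>i<n. W (v i) (y i))))
     = (\<Sum>y\<in>words n. \<Prod>i<n. sqrt (W (u i) (y i) * W (v i) (y i)))"
    by (simp add: prod.distrib[symmetric] sqrt_prod flip: real_sqrt_mult)
  also have "\<dots> = (\<Prod>i<n. \<Sum>a\<in>UNIV. sqrt (W (u i) a * W (v i) a))"
    by (rule sum_words_prod)
  finally show ?thesis .
qed

lemma bhatt_far:
  fixes W :: "'x \<Rightarrow> 'y::finite \<Rightarrow> real"
  assumes ch: "channel M W" and u: "\<forall>i<n. u i \<in> space M" and v: "\<forall>i<n. v i \<in> space M"
    and far: "\<forall>i<n. u i \<noteq> v i \<longrightarrow> dist ((\<chi> y. sqrt (W (u i) y))::real^'y) (\<chi> y. sqrt (W (v i) y)) > \<delta>"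
    and d: "\<delta> > 0" and D0: "card {i. i < n \<and> u i \<noteq> v i} \<ge> D0"
  shows "(\<Sum>y\<in>words n. sqrt ((\<Prod>i<n. W (u i) (y i)) * (\<Prod>i<n. W (v i) (y i)))) \<le> exp (- (D0 * \<delta>\<^sup>2 / 2))"
proof -
  define dd where "dd i = (dist ((\<chi> y. sqrt (W (u i) y))::real^'y) (\<chi> y. sqrt (W (v i) y)))\<^sup>2" for i
  have B: "(\<Sum>a\<in>UNIV. sqrt (W (u i) a * W (v i) a)) = 1 - dd i / 2" if i: "i < n" for i
    unfolding dd_def dist_sq_sqrt using u v i ch by (intro bhatt) (auto intro: channelD)
  have "(\<Prod>i<n. \<Sum>a\<in>UNIV. sqrt (W (u i) a * W (v i) a)) \<le> (\<Prod>i<n. exp (- (dd i / 2)))"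
  proof (rule prod_mono)
    fix i assume "i \<in> {..<n}"
    then have i: "i < n" by simp
    have "0 \<le> (\<Sum>a\<in>UNIV. sqrt (W (u i) a * W (v i) a))"
      using u v i ch by (intro sum_nonneg real_sqrt_ge_zero mult_nonneg_nonneg) (auto intro: channelD)
    then show "0 \<le> (\<Sum>a\<in>UNIV. sqrt (W (u i) a * W (v i) a)) \<and> (\<Sum>a\<in>UNIV. sqrt (W (u i) a * W (v i) a)) \<le> exp (- (dd i / 2))"
      using B[OF i] exp_ge_add_one_self[of "- (dd i / 2)"] by simp
  qed
  also have "\<dots> = exp (\<Sum>i<n. - (dd i / 2))" by (rule exp_sum[symmetric]) simp
  also have "exp (\<Sum>i<n. - (dd i / 2)) = exp (- (\<Sum>i<n. dd i) / 2)" by (simp add: sum_negf sum_divide_distrib)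
  also have "\<dots> \<le> exp (- (D0 * \<delta>\<^sup>2 / 2))"
  proof -
    let ?S = "{i. i < n \<and> u i \<noteq> v i}"
    have "real D0 * \<delta>\<^sup>2 \<le> real (card ?S) * \<delta>\<^sup>2" using D0 by (intro mult_right_mono) auto
    also have "\<dots> = (\<Sum>i\<in>?S. \<delta>\<^sup>2)" by simp
    also have "\<dots> \<le> (\<Sum>i\<in>?S. dd i)"
    proof (rule sum_mono)
      fix i assume "i \<in> ?S"
      then have "dist ((\<chi> y. sqrt (W (u i) y))::real^'y) (\<chi> y. sqrt (W (v i) y)) > \<delta>" using far by auto
      then show "\<delta>\<^sup>2 \<le> dd i" unfolding dd_def using d by (intro power_mono) auto
    qed
    also have "\<dots> \<le> (\<Sum>i<n. dd i)" unfolding dd_def by (intro sum_mono2) auto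
    finally show ?thesis by simp
  qed
  finally show ?thesis unfolding bhatt_words .
qed

lemma sqrt_exp: "sqrt (exp x) = exp (x / 2)"
proof -
  have "exp x = (exp (x/2))\<^sup>2" by (simp add: power2_eq_square exp_add[symmetric])
  then show ?thesis by simp
qed

lemma err2:
  fixes W :: "'x \<Rightarrow> 'y::finite \<Rightarrow> real"
  assumes ch: "channel M W" and u: "\<forall>i<n. u i \<in> space M" and v: "\<forall>i<n. v i \<in> space M"
    and t: "\<tau> > 0" and w: "\<bar>Hs W n u - Hs W n v\<bar> < w"
    and far: "\<forall>i<n. u i \<noteq> v i \<longrightarrow> dist ((\<chi> y. sqrt (W (u i) y))::real^'y) (\<chi> y. sqrt (W (v i) y)) > \<delta>"
    and d: "\<delta> > 0" and D0: "card {i. i < n \<and> u i \<noteq> v i} \<ge> D0"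
  shows "prodW W n v (Etest W n \<tau> u) \<le> exp (\<tau> + w / 2 - D0 * \<delta>\<^sup>2 / 2) + 4 * real CARD('y) * n / \<tau>\<^sup>2"
proof -
  let ?P = "\<lambda>y. \<Prod>i<n. W (u i) (y i)"
  let ?Q = "\<lambda>y. \<Prod>i<n. W (v i) (y i)"
  let ?g = "\<lambda>i a. ln (W (v i) a) + Hent (W (v i))"
  let ?E = "Etest W n \<tau> u"
  define c where "c = exp (2 * \<tau> + w)"
  have c0: "c \<ge> 0" by (simp add: c_def)
  have Ew: "?E \<subseteq> words n" unfolding Etest_def by auto
  have P0: "0 \<le> ?P y" "0 \<le> ?Q y" for y using prod_nonneg_W[OF ch u] prod_nonneg_W[OF ch v] by auto
  have pt: "?Q y \<le> (if ?Q y \<le> c * ?P y then ?Q y else 0) + (if \<tau> \<le> \<bar>\<Sum>i<n. ?g i (y i)\<bar> then ?Q y else 0)"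
    if y: "y \<in> ?E" for y
  proof (cases "?Q y \<le> c * ?P y")
    case True then show ?thesis using P0 by simp
  next
    case False
    have "\<tau> \<le> \<bar>\<Sum>i<n. ?g i (y i)\<bar>"
    proof (rule ccontr)
      assume "\<not> \<tau> \<le> \<bar>\<Sum>i<n. ?g i (y i)\<bar>"
      then have lt: "(\<Sum>i<n. ln (W (v i) (y i))) + Hs W n v < \<tau>" by (simp add: sum.distrib Hs_def)
      have Qpos: "?Q y \<noteq> 0" using False P0 c0 by (metis mult_nonneg_nonneg not_le)
      have vpos: "\<forall>i<n. 0 < W (v i) (y i)" by (rule prod_pos_all[OF ch v Qpos])
      have upos: "\<forall>i<n. 0 < W (u i) (y i)" and ge: "- Hs W n u - \<tau> \<le> (\<Sum>i<n. ln (W (u i) (y i)))"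
        using y unfolding Etest_def by auto
      have lnQ: "ln (?Q y) = (\<Sum>i<n. ln (W (v i) (y i)))" by (rule ln_prod_pos[OF vpos])
      have lnP: "ln (?P y) = (\<Sum>i<n. ln (W (u i) (y i)))" by (rule ln_prod_pos[OF upos])
      have Pp: "?P y > 0" "?Q y > 0" using upos vpos by (auto intro: prod_pos)
      have "ln (?Q y) < ln (?P y) + (2 * \<tau> + w)" using lt ge w lnQ lnP by linarith
      then have "exp (ln (?Q y)) < exp (ln (?P y) + (2 * \<tau> + w))" by simp
      then have "?Q y < ?P y * c" using Pp by (simp add: exp_add c_def)
      then show False using False by (simp add: mult.commute)
    qed
    then show ?thesis using False by simp
  qed
  have "prodW W n v ?E = (\<Sum>y\<in>?E. ?Q y)" unfolding prodW_def using Ew by (simp add: Int_absorb2)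
  also have "\<dots> \<le> (\<Sum>y\<in>?E. (if ?Q y \<le> c * ?P y then ?Q y else 0) + (if \<tau> \<le> \<bar>\<Sum>i<n. ?g i (y i)\<bar> then ?Q y else 0))"
    using pt by (rule sum_mono)
  also have "\<dots> \<le> (\<Sum>y\<in>words n. (if ?Q y \<le> c * ?P y then ?Q y else 0) + (if \<tau> \<le> \<bar>\<Sum>i<n. ?g i (y i)\<bar> then ?Q y else 0))"
    using Ew P0 by (intro sum_mono2) auto
  also have "\<dots> = (\<Sum>y\<in>{y\<in>words n. ?Q y \<le> c * ?P y}. ?Q y) + (\<Sum>y\<in>{y\<in>words n. \<tau> \<le> \<bar>\<Sum>i<n. ?g i (y i)\<bar>}. ?Q y)"
    by (simp add: sum.distrib sum.inter_filter)
  also have "\<dots> \<le> sqrt c * (\<Sum>y\<in>words n. sqrt (?P y * ?Q y)) + 4 * real CARD('y) * n / \<tau>\<^sup>2"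
    using P0 c0 by (intro add_mono bhatt_event dev_prob[OF ch v t]) auto
  also have "\<dots> \<le> sqrt c * exp (- (D0 * \<delta>\<^sup>2 / 2)) + 4 * real CARD('y) * n / \<tau>\<^sup>2"
    using bhatt_far[OF ch u v far d D0] c0 by (intro add_mono mult_left_mono) auto
  also have "sqrt c * exp (- (D0 * \<delta>\<^sup>2 / 2)) = exp (\<tau> + w / 2 - D0 * \<delta>\<^sup>2 / 2)"
    by (simp add: c_def sqrt_exp exp_add[symmetric] exp_diff)
  finally show ?thesis .
qed

lemma code_exists:
  fixes W :: "'x \<Rightarrow> 'y::finite \<Rightarrow> real" and L :: "'x set"
  assumes ch: "channel M W" and L: "L \<subseteq> space M" "finite L" "card L = K" "K \<ge> 1"
    and sep: "\<forall>a\<in>L. \<forall>b\<in>L. a \<noteq> b \<longrightarrow> dist ((\<chi> y. sqrt (W a y))::real^'y) (\<chi> y. sqrt (W b y)) > \<delta>"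
    and d: "\<delta> > 0" and t: "\<tau> > 0" and w: "w > 0"
    and k0: "k0 * (2 ^ n * K ^ D0) \<le> K ^ n" and D01: "D0 \<ge> 1"
    and h1: "4 * real CARD('y) * n / \<tau>\<^sup>2 \<le> l1"
    and h2: "exp (\<tau> + w / 2 - D0 * \<delta>\<^sup>2 / 2) + 4 * real CARD('y) * n / \<tau>\<^sup>2 \<le> l2"
  shows "\<exists>N u E. DI_code M W n N l1 l2 u E \<and> k0 \<le> (nat \<lfloor>real n * real CARD('y) / w\<rfloor> + 1) * N"
proof -
  obtain C where C: "C \<subseteq> PiE {..<n} (\<lambda>_. L)" "card C = k0"
      "\<forall>u\<in>C. \<forall>v\<in>C. u \<noteq> v \<longrightarrow> card {i. i < n \<and> u i \<noteq> v i} \<ge> D0"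
    using GV[OF L(2,3,4) D01 k0] by blast
  have finC: "finite C" using C(1) L(2) by (meson finite_PiE finite_lessThan finite_subset)
  have letters: "\<forall>i<n. u i \<in> space M" if "u \<in> C" for u using C(1) L(1) that by (auto simp: PiE_iff)
  have Hb: "0 \<le> Hs W n u \<and> Hs W n u \<le> real n * real CARD('y)" if "u \<in> C" for u
  proof -
    have "0 \<le> Hs W n u" unfolding Hs_def using letters[OF that] Hent_bounds(1)[OF ch] by (intro sum_nonneg) auto
    moreover have "Hs W n u \<le> (\<Sum>i<n. real CARD('y))"
      unfolding Hs_def using letters[OF that] Hent_bounds(2)[OF ch] by (intro sum_mono) auto
    ultimately show ?thesis by simp
  qed
  obtain C' where C': "C' \<subseteq> C" "card C \<le> (nat \<lfloor>real n * real CARD('y) / w\<rfloor> + 1) * card C'"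
      "\<forall>u\<in>C'. \<forall>v\<in>C'. \<bar>Hs W n u - Hs W n v\<bar> < w"
    using window[OF finC w, of "Hs W n" "real n * real CARD('y)"] Hb by blast
  have finC': "finite C'" using C'(1) finC by (rule finite_subset)
  obtain h where h: "bij_betw h {0..<card C'} C'" using ex_bij_betw_nat_finite[OF finC'] by blast
  define N where "N = card C'"
  have hC: "h j \<in> C'" if "j < N" for j using h that unfolding N_def bij_betw_def by auto
  have hinj: "h j \<noteq> h k" if "j < N" "k < N" "j \<noteq> k" for j k
    using h that unfolding N_def bij_betw_def inj_on_def by auto
  have "DI_code M W n N l1 l2 h (\<lambda>j. Etest W n \<tau> (h j))"
    unfolding DI_code_def
  proof (intro conjI allI impI)
    fix j assume j: "j < N"
    have hj: "h j \<in> C" using hC[OF j] C'(1) by auto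
    show "\<And>i. i < n \<Longrightarrow> h j i \<in> space M" using letters[OF hj] by auto
    show "Etest W n \<tau> (h j) \<subseteq> words n" unfolding Etest_def by auto
    show "1 - l1 \<le> prodW W n (h j) (Etest W n \<tau> (h j))"
      using err1[OF ch letters[OF hj] t] h1 by linarith
  next
    fix j k assume j: "j < N" and k: "k < N" and jk: "j \<noteq> k"
    have hj: "h j \<in> C" "h k \<in> C" using hC[OF j] hC[OF k] C'(1) by auto
    have ne: "h j \<noteq> h k" using hinj[OF j k jk] .
    have far: "\<forall>i<n. h k i \<noteq> h j i \<longrightarrow> dist ((\<chi> y. sqrt (W (h k i) y))::real^'y) (\<chi> y. sqrt (W (h j i) y)) > \<delta>"
      using sep C(1) hj by (auto simp: PiE_iff)
    have D: "card {i. i < n \<and> h k i \<noteq> h j i} \<ge> D0" using C(3) hj ne by auto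
    have ww: "\<bar>Hs W n (h k) - Hs W n (h j)\<bar> < w" using C'(3) hC[OF j] hC[OF k] by auto
    show "prodW W n (h j) (Etest W n \<tau> (h k)) \<le> l2"
      using err2[OF ch letters[OF hj(2)] letters[OF hj(1)] t ww far d D] h2 by linarith
  qed
  moreover have "k0 \<le> (nat \<lfloor>real n * real CARD('y) / w\<rfloor> + 1) * N" using C(2) C'(2) N_def by simp
  ultimately show ?thesis by blast
qed

lemma nat_div_ge: "real (a div b) \<ge> real a / real b - 1" if "b > 0" for a b :: nat
proof -
  have "a = b * (a div b) + a mod b" by simp
  then have "real a = real b * real (a div b) + real (a mod b)" by (metis of_nat_add of_nat_mult)
  moreover have "real (a mod b) < real b" using that by simp
  ultimately have "real a < real b * (real (a div b) + 1)" by (simp add: algebra_simps)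
  then have "real a / real b < real (a div b) + 1" using that by (simp add: divide_less_eq mult.commute)
  then show ?thesis by simp
qed

lemma lower_at_n:
  fixes W :: "'x \<Rightarrow> 'y::finite \<Rightarrow> real"
  assumes ch: "channel M W" and ne: "space M \<noteq> {}" and l: "0 < l1" "0 < l2" and n: "n \<ge> 2"
    and \<rho>: "0 < \<rho>" "\<rho> \<le> 1/4" and \<eta>: "\<eta> > 0" "\<eta> < 1/4" and t: "t > 0" and s: "s > 0" and dp: "d' > 0"
    and key: "(1 - \<rho>) * d' * (1/4 - \<eta>) \<ge> t + s"
    and i1: "4 * real CARD('y) * n / (real n powr (1/2 + \<eta>))\<^sup>2 \<le> l1"
    and i1': "4 * real CARD('y) * n / (real n powr (1/2 + \<eta>))\<^sup>2 \<le> l2 / 2"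
    and i2: "real n powr (1/2 + \<eta>) + sqrt n / 2 - \<rho> * real n powr (1/2 + 2 * \<eta>) / 2 \<le> ln (l2 / 2)"
    and i3: "d' < log 2 (real (cover_num (sqrt_X M W) (real n powr - (1/4 - \<eta>)))) / (- log 2 (real n powr - (1/4 - \<eta>)))"
    and i4: "ln 4 \<le> (t + s) * n * ln n - d' * (1/4 - \<eta>) * ln n - n * ln 2"
    and i5: "0 < s * n * ln n - d' * (1/4 - \<eta>) * ln n - (n + 1) * ln 2 - ln (real CARD('y) * sqrt n + 1)"
  shows "ereal t < DI_rate M W l1 l2 n"
proof -
  define \<alpha> where "\<alpha> = 1/4 - \<eta>"
  have a: "\<alpha> > 0" using \<eta> by (simp add: \<alpha>_def)
  define \<delta> where "\<delta> = real n powr - \<alpha>"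
  define m where "m = real CARD('y)"
  have m: "m \<ge> 1" unfolding m_def by simp
  have n0: "real n > 0" "real n \<ge> 2" using n by auto
  have lnn: "ln (real n) > 0" using n by simp
  have d0: "\<delta> > 0" using n0 by (simp add: \<delta>_def)
  have lnd: "ln \<delta> = - \<alpha> * ln n" using n0 by (simp add: \<delta>_def ln_powr)
  have d1: "- ln \<delta> > 0" using lnd a lnn by simp
  define K where "K = cover_num (sqrt_X M W) \<delta>"
  have K1: "K \<ge> 1" unfolding K_def by (rule cover_num_pos[OF ch d0 ne])
  have lnK0: "d' * (- ln \<delta>) < ln (real K)"
  proof -
    have "d' < ln (real K) / (- ln \<delta>)" using i3 ratio_ln[OF d0] unfolding K_def \<delta>_def \<alpha>_def by simp
    then show "d' * (- ln \<delta>) < ln (real K)" using pos_less_divide_eq[OF d1] by blast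
  qed
  have lnK: "ln (real K) > d' * \<alpha> * ln n" using lnK0 lnd by (simp add: algebra_simps)
  obtain L where L: "L \<subseteq> space M" "finite L" "card L = K"
     "\<forall>a\<in>L. \<forall>b\<in>L. a \<noteq> b \<longrightarrow> dist ((\<chi> y. sqrt (W a y))::real^'y) (\<chi> y. sqrt (W b y)) > \<delta>"
    using separated_exists[OF ch d0 ne] unfolding K_def by blast
  define \<tau> where "\<tau> = real n powr (1/2 + \<eta>)"
  define w where "w = sqrt (real n)"
  have tau: "\<tau> > 0" using n0 by (simp add: \<tau>_def)
  have w: "w > 0" using n0 by (simp add: w_def)
  define D0 where "D0 = nat \<lceil>\<rho> * n\<rceil>"
  have D0a: "real D0 \<ge> \<rho> * n" unfolding D0_def by linarith
  have D0b: "D0 \<le> n"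
  proof -
    have h: "\<rho> * n \<le> n" using \<rho> n0 by simp
    then have "\<lceil>\<rho> * n\<rceil> \<le> int n" by (metis ceiling_le_iff of_int_of_nat_eq)
    then show ?thesis unfolding D0_def using h by simp
  qed
  have D01: "D0 \<ge> 1"
  proof -
    have "0 < \<rho> * n" using \<rho> n0 by simp
    then have "(1::int) \<le> \<lceil>\<rho> * n\<rceil>" by (simp add: le_ceiling_iff)
    then have "nat 1 \<le> nat \<lceil>\<rho> * n\<rceil>" by (rule nat_mono)
    then show ?thesis unfolding D0_def by simp
  qed
  have D0c: "real D0 \<le> \<rho> * n + 1" unfolding D0_def using \<rho> n0 by (simp add: of_nat_nat)
  define k0 where "k0 = K ^ (n - D0) div 2 ^ n"
  have k0: "k0 * (2 ^ n * K ^ D0) \<le> K ^ n"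
  proof -
    have "k0 * 2 ^ n \<le> K ^ (n - D0)" unfolding k0_def by (rule div_times_less_eq_dividend)
    then have "k0 * 2 ^ n * K ^ D0 \<le> K ^ (n - D0) * K ^ D0" by (rule mult_right_mono) simp
    also have "\<dots> = K ^ n" using D0b by (simp add: power_add[symmetric])
    finally show ?thesis by (simp add: mult.assoc)
  qed
  have h1: "4 * real CARD('y) * n / \<tau>\<^sup>2 \<le> l1" using i1 by (simp add: \<tau>_def)
  have h2: "exp (\<tau> + w / 2 - D0 * \<delta>\<^sup>2 / 2) + 4 * real CARD('y) * n / \<tau>\<^sup>2 \<le> l2"
  proof -
    have "\<rho> * real n powr (1/2 + 2 * \<eta>) = \<rho> * (real n * \<delta>\<^sup>2)"
    proof -
      have "real n * \<delta>\<^sup>2 = real n powr 1 * (real n powr - \<alpha> * real n powr - \<alpha>)"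
        using n0 unfolding \<delta>_def power2_eq_square by simp
      also have "\<dots> = real n powr (1 + (- \<alpha> + - \<alpha>))" by (simp only: powr_add[symmetric])
      also have "1 + (- \<alpha> + - \<alpha>) = 1/2 + 2 * \<eta>" by (simp add: \<alpha>_def)
      finally show ?thesis by simp
    qed
    also have "\<dots> \<le> D0 * \<delta>\<^sup>2" using D0a by (simp add: mult.assoc[symmetric] mult_right_mono)
    finally have "\<tau> + w / 2 - D0 * \<delta>\<^sup>2 / 2 \<le> ln (l2 / 2)" using i2 by (simp add: \<tau>_def w_def)
    then have "exp (\<tau> + w / 2 - D0 * \<delta>\<^sup>2 / 2) \<le> exp (ln (l2 / 2))" by simp
    also have "exp (ln (l2 / 2)) = l2 / 2" using l by simp
    finally have "exp (\<tau> + w / 2 - D0 * \<delta>\<^sup>2 / 2) \<le> l2 / 2" .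
    then show ?thesis using i1' by (simp add: \<tau>_def)
  qed
  obtain N u E where code: "DI_code M W n N l1 l2 u E" and kN: "k0 \<le> (nat \<lfloor>real n * real CARD('y) / w\<rfloor> + 1) * N"
    using code_exists[OF ch L(1,2,3) K1 L(4) d0 tau w k0 D01 h1 h2] by blast
  define Wn where "Wn = nat \<lfloor>real n * real CARD('y) / w\<rfloor> + 1"
  have Wn: "real Wn \<le> m * sqrt n + 1" "real Wn \<ge> 1"
  proof -
    have e: "real n / sqrt (real n) = sqrt (real n)" using n0 by (intro real_div_sqrt) simp
    have "real n * real CARD('y) / w = m * (real n / sqrt (real n))" unfolding w_def m_def
      by (simp add: mult.commute)
    then have "real n * real CARD('y) / w = m * sqrt n" using e by simp
    then show "real Wn \<le> m * sqrt n + 1" unfolding Wn_def using m by (simp add: of_nat_nat)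
  qed (simp add: Wn_def)
  define X where "X = real K ^ (n - D0) / 2 ^ n"
  have Kpos: "real K > 0" using K1 by simp
  have lnX: "ln X = real (n - D0) * ln (real K) - n * ln 2"
    unfolding X_def using Kpos by (simp add: ln_div ln_realpow)
  have rn: "\<rho> * n \<le> (1/4) * n" using \<rho> n0 by (intro mult_right_mono) auto
  have nD: "real (n - D0) \<ge> (1 - \<rho>) * n - 1" "(1 - \<rho>) * n - 1 \<ge> 0"
  proof -
    show "real (n - D0) \<ge> (1 - \<rho>) * n - 1" using D0b D0c by (simp add: of_nat_diff algebra_simps)
    have "(1 - \<rho>) * n = n - \<rho> * n" by (simp add: algebra_simps)
    then show "(1 - \<rho>) * n - 1 \<ge> 0" using rn n0 by linarith
  qed
  have lnK0: "ln (real K) \<ge> 0" using K1 by simp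
  have A1: "ln X \<ge> ((1 - \<rho>) * n - 1) * ln (real K) - n * ln 2"
    unfolding lnX using nD lnK0 by (simp add: mult_right_mono)
  have A2: "((1 - \<rho>) * n - 1) * ln (real K) \<ge> ((1 - \<rho>) * n - 1) * (d' * \<alpha> * ln n)"
    using nD lnK by (intro mult_left_mono) auto
  have A3: "((1 - \<rho>) * n - 1) * (d' * \<alpha> * ln n) = (1 - \<rho>) * d' * \<alpha> * (n * ln n) - d' * \<alpha> * ln n"
    by (simp add: algebra_simps)
  have A4: "(1 - \<rho>) * d' * \<alpha> * (n * ln n) \<ge> (t + s) * (n * ln n)"
    using key lnn n0 unfolding \<alpha>_def by (intro mult_right_mono) auto
  have A5: "(t + s) * (n * ln n) = (t + s) * n * ln n" by (simp add: algebra_simps)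
  have lnX2: "ln X \<ge> (t + s) * n * ln n - d' * \<alpha> * ln n - n * ln 2"
    using A1 A2 A3 A4 A5 by linarith
  have Xpos: "X > 0" unfolding X_def using Kpos by simp
  have "ln 4 \<le> ln X" using lnX2 i4 unfolding \<alpha>_def by linarith
  then have X4: "X \<ge> 4" using Xpos by simp
  have k0X: "real k0 \<ge> X / 2"
  proof -
    have "real k0 \<ge> real (K ^ (n - D0)) / real (2 ^ n) - 1" unfolding k0_def by (rule nat_div_ge) simp
    then have "real k0 \<ge> X - 1" unfolding X_def by simp
    then show ?thesis using X4 by linarith
  qed
  have N1: "N \<ge> 1"
  proof (rule ccontr)
    assume "\<not> N \<ge> 1" then have "N = 0" by simp
    then have "k0 = 0" using kN by simp
    then show False using k0X X4 by simp
  qed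
  have kN': "real k0 \<le> real Wn * real N"
  proof -
    have "k0 \<le> Wn * N" using kN unfolding Wn_def .
    then have "real k0 \<le> real (Wn * N)" by (simp only: of_nat_le_iff)
    then show ?thesis by simp
  qed
  have k0pos: "real k0 > 0" using k0X X4 by simp
  have "ln (real k0) \<le> ln (real Wn * real N)"
    using kN' k0pos by (intro ln_mono) auto
  also have "\<dots> = ln (real Wn) + ln (real N)" using Wn N1 by (simp add: ln_mult)
  finally have "ln (real N) \<ge> ln (real k0) - ln (real Wn)" by simp
  moreover have "ln (real k0) \<ge> ln X - ln 2"
  proof -
    have "ln (X / 2) \<le> ln (real k0)" using k0X Xpos by (intro ln_mono) auto
    then show ?thesis using Xpos by (simp add: ln_div)
  qed
  moreover have "ln (real Wn) \<le> ln (m * sqrt n + 1)" using Wn by (intro ln_mono) auto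
  ultimately have "ln (real N) \<ge> (t + s) * n * ln n - d' * \<alpha> * ln n - n * ln 2 - ln 2 - ln (m * sqrt n + 1)"
    using lnX2 by linarith
  then have "ln (real N) > t * n * ln n" using i5 unfolding \<alpha>_def m_def by (simp add: algebra_simps)
  then have "t < ln (real N) / (real n * ln n)" using lnn n0 by (simp add: less_divide_eq mult.assoc)
  then have "ereal t < ereal (ln (real N) / (real n * ln n))" by simp
  also have "\<dots> \<le> DI_rate M W l1 l2 n" by (rule rate_lower[OF code n N1])
  finally show ?thesis .
qed

lemma lower_key:
  fixes W :: "'x \<Rightarrow> 'y::finite \<Rightarrow> real"
  assumes ch: "channel M W" and ne: "space M \<noteq> {}" and l: "0 < l1" "0 < l2"
    and t: "t > 0" and td: "4 * t < d'" and D: "ereal d' < lower_minkowski_dim (sqrt_X M W)"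
  shows "eventually (\<lambda>n. ereal t < DI_rate M W l1 l2 n) sequentially"
proof -
  define r where "r = 4 * t / d'"
  have dp: "d' > 0" using t td by simp
  have r: "0 < r" "r < 1" using t td dp by (auto simp: r_def field_simps)
  define \<rho> where "\<rho> = (1 - r) / 4"
  define \<eta> where "\<eta> = (1 - r) / 16"
  define s where "s = (d' / 4 - t) / 2"
  define m where "m = real CARD('y)"
  have m: "m > 0" unfolding m_def by simp
  have rho: "0 < \<rho>" "\<rho> \<le> 1/4" using r by (auto simp: \<rho>_def)
  have eta: "\<eta> > 0" "\<eta> < 1/4" using r by (auto simp: \<eta>_def)
  have s: "s > 0" using td by (simp add: s_def)
  define \<alpha> where "\<alpha> = 1/4 - \<eta>"
  have a: "\<alpha> > 0" using eta by (simp add: \<alpha>_def)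
  have key: "(1 - \<rho>) * d' * (1/4 - \<eta>) \<ge> t + s"
  proof -
    have e1: "1/4 - \<eta> = (1 - \<rho>) / 4" by (simp add: \<eta>_def \<rho>_def field_simps)
    have "(1 - \<rho>) * d' * (1/4 - \<eta>) = (1 - \<rho>)\<^sup>2 * d' / 4" unfolding e1 by (simp add: power2_eq_square)
    also have "\<dots> \<ge> (1 - 2 * \<rho>) * d' / 4"
    proof -
      have "(1 - 2 * \<rho>) \<le> (1 - \<rho>)\<^sup>2" by (simp add: power2_eq_square algebra_simps)
      then show ?thesis using dp by (intro divide_right_mono mult_right_mono) auto
    qed
    also have "(1 - 2 * \<rho>) * d' / 4 = t + s" using dp by (simp add: \<rho>_def s_def r_def field_simps)
    finally show ?thesis .
  qed
  have ev1: "eventually (\<lambda>n. 4 * m * real n / (real n powr (1/2 + \<eta>))\<^sup>2 < min l1 (l2 / 2)) sequentially"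
  proof -
    have "((\<lambda>n. 4 * m * real n / (real n powr (1/2 + \<eta>))\<^sup>2) \<longlongrightarrow> 0) sequentially"
      using eta m by real_asymp
    then show ?thesis using l by (intro order_tendstoD(2)) auto
  qed
  have ev2: "eventually (\<lambda>n. real n powr (1/2 + \<eta>) + sqrt n / 2 - \<rho> * real n powr (1/2 + 2 * \<eta>) / 2 \<le> ln (l2 / 2)) sequentially"
  proof -
    have "filterlim (\<lambda>n. real n powr (1/2 + \<eta>) + sqrt n / 2 - \<rho> * real n powr (1/2 + 2 * \<eta>) / 2) at_bot sequentially"
      using eta rho by real_asymp
    then show ?thesis unfolding filterlim_at_bot by blast
  qed
  have ev3: "eventually (\<lambda>n. d' < log 2 (real (cover_num (sqrt_X M W) (real n powr - (1/4 - \<eta>)))) / (- log 2 (real n powr - (1/4 - \<eta>)))) sequentially"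
  proof -
    have lim: "filterlim (\<lambda>n. real n powr - \<alpha>) (at_right 0) sequentially" using a by real_asymp
    have "eventually (\<lambda>d. ereal d' < ereal (log 2 (real (cover_num (sqrt_X M W) d)) / - log 2 d)) (at_right 0)"
      using D unfolding lower_minkowski_dim_def by (rule less_LiminfD)
    then have "eventually (\<lambda>n. ereal d' < ereal (log 2 (real (cover_num (sqrt_X M W) (real n powr - \<alpha>))) / - log 2 (real n powr - \<alpha>))) sequentially"
      using lim unfolding filterlim_iff by blast
    then show ?thesis unfolding \<alpha>_def by simp
  qed
  have ev4: "eventually (\<lambda>n. ln 4 \<le> (t + s) * n * ln n - d' * (1/4 - \<eta>) * ln n - n * ln 2) sequentially"
  proof -
    have "filterlim (\<lambda>n. (t + s) * real n * ln (real n) - d' * \<alpha> * ln (real n) - real n * ln 2) at_top sequentially"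
      using t s by real_asymp
    then show ?thesis unfolding filterlim_at_top \<alpha>_def by blast
  qed
  have ev5: "eventually (\<lambda>n. 0 < s * n * ln n - d' * (1/4 - \<eta>) * ln n - (real n + 1) * ln 2 - ln (real CARD('y) * sqrt n + 1)) sequentially"
  proof -
    have "filterlim (\<lambda>n. s * real n * ln (real n) - d' * \<alpha> * ln (real n) - (real n + 1) * ln 2 - ln (m * sqrt (real n) + 1)) at_top sequentially"
      using s m by real_asymp
    then have "eventually (\<lambda>n. 1 \<le> s * real n * ln (real n) - d' * \<alpha> * ln (real n) - (real n + 1) * ln 2 - ln (m * sqrt (real n) + 1)) sequentially"
      unfolding filterlim_at_top by blast
    then show ?thesis unfolding \<alpha>_def m_def
    proof eventually_elim
      case (elim n)
      show ?case using elim by linarith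
    qed
  qed
  have ev6: "eventually (\<lambda>n. n \<ge> (2::nat)) sequentially" by (rule eventually_ge_at_top)
  from ev1 ev2 ev3 ev4 ev5 ev6 show ?thesis
  proof eventually_elim
    case (elim n)
    show ?case
      by (rule lower_at_n[OF ch ne l elim(6) rho eta t s dp key _ _ elim(2) elim(3) elim(4) elim(5)])
         (use elim(1) in \<open>auto simp: m_def\<close>)
  qed
qed

lemma rate_nonneg:
  fixes W :: "'x \<Rightarrow> 'y::finite \<Rightarrow> real"
  assumes ch: "channel M W" and ne: "space M \<noteq> {}" and l1: "0 \<le> l1" and n: "n \<ge> 2"
  shows "0 \<le> DI_rate M W l1 l2 n"
proof -
  obtain x0 where "x0 \<in> space M" using ne by auto
  from rate_lower[OF code_one[OF ch this l1] n] show ?thesis by (simp add: zero_ereal_def)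
qed

lemma lower_liminf:
  fixes W :: "'x \<Rightarrow> 'y::finite \<Rightarrow> real"
  assumes ch: "channel M W" and ne: "space M \<noteq> {}" and l: "0 < l1" "0 < l2"
  shows "ereal (1/4) * lower_minkowski_dim (sqrt_X M W) \<le> liminf (DI_rate M W l1 l2)"
  unfolding le_Liminf_iff
proof (intro allI impI)
  fix y assume y: "y < ereal (1/4) * lower_minkowski_dim (sqrt_X M W)"
  let ?D = "lower_minkowski_dim (sqrt_X M W)"
  have D0: "0 \<le> ?D" by (rule dim_nonneg[OF ch ne])
  show "\<forall>\<^sub>F n in sequentially. y < DI_rate M W l1 l2 n"
  proof (cases y)
    case MInf
    then show ?thesis by (simp add: DI_rate_def)
  next
    case PInf
    then show ?thesis using y by simp
  next
    case (real y0)
    show ?thesis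
    proof (cases "y0 < 0")
      case True
      have "eventually (\<lambda>n. n \<ge> (2::nat)) sequentially" by (rule eventually_ge_at_top)
      then show ?thesis
      proof eventually_elim
        case (elim n)
        have r0: "ereal 0 \<le> DI_rate M W l1 l2 n" using rate_nonneg[OF ch ne _ elim] l by (simp add: zero_ereal_def)
        have "ereal y0 < ereal 0" using True by simp
        then show ?case unfolding real using r0 by (rule order.strict_trans2)
      qed
    next
      case False
      obtain t where t: "y < ereal t" "ereal t < ereal (1/4) * ?D" using ereal_dense2[OF y] by blast
      have t0: "t > 0" using t(1) real False by simp
      have "ereal (4 * t) < ?D"
      proof (cases ?D)
        case (real d)
        then show ?thesis using t(2) by simp
      qed (use D0 in auto)
      then obtain d' where d': "ereal (4 * t) < ereal d'" "ereal d' < ?D" using ereal_dense2 by blast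
      have "eventually (\<lambda>n. ereal t < DI_rate M W l1 l2 n) sequentially"
        using lower_key[OF ch ne l t0 _ d'(2)] d'(1) by simp
      then show ?thesis
      proof eventually_elim
        case (elim n)
        show ?case using t(1) elim by (rule less_trans)
      qed
    qed
  qed
qed

theorem theorem6:
  fixes M :: "'x measure" and W :: "'x \<Rightarrow> 'y::finite \<Rightarrow> real" and l1 l2 :: real
  assumes "space M \<noteq> {}"
    and "channel M W"
    and "0 < l1" and "0 < l2" and "l1 + l2 < 1"
  shows "ereal (1/4) * lower_minkowski_dim (sqrt_X M W) \<le> C_DI M W \<and>
           C_DI M W \<le> liminf (DI_rate M W l1 l2) \<and>
           liminf (DI_rate M W l1 l2) \<le> ereal (1/2) * lower_minkowski_dim (sqrt_X M W)"
proof (intro conjI)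
  show "ereal (1/4) * lower_minkowski_dim (sqrt_X M W) \<le> C_DI M W"
    unfolding C_DI_def
    by (rule INF_greatest) (use lower_liminf[OF assms(2,1)] in auto)
  show "C_DI M W \<le> liminf (DI_rate M W l1 l2)"
    unfolding C_DI_def using assms by (intro INF_lower2[of "(l1, l2)"]) auto
  show "liminf (DI_rate M W l1 l2) \<le> ereal (1/2) * lower_minkowski_dim (sqrt_X M W)"
    by (rule upper_asym[OF assms(2,1,3,4,5)])
qed

end
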